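(* Let $L$ and ${}^*L=e^{\sigma(x)}L+\beta$ be as in the context and $\tau=e^{\sigma}\,{}^*L/L$. Then the $v$-scalar curvatures satisfy $${}^*S=\tau^{-1}\Big[S-\frac{n-2}{{}^*L}A_\beta\Big].$$
   Context: $M$ is a smooth manifold of dimension $n$ with local coordinates $(x^i)$ and induced fiber coordinates $(y^i)$ on $TM$. $L(x,y)$ is a Finsler metric: positive and smooth for $y\neq0$, positively homogeneous of degree 1 in $y$, with positive definite fundamental tensor $g_{ij}=\frac12\frac{\partial^2L^2}{\partial y^i\partial y^j}$ and inverse $g^{ij}$. $\sigma(x)$ is a smooth function on $M$ and $\beta(x,y)=b_i(x)y^i$ is a 1-form; the conformal $\beta$-change is ${}^*L=e^{\sigma(x)}L+\beta$, assumed to be again a Finsler metric. Notation: $l_i=\partial L/\partial y^i$, $l^i=g^{ij}l_j$, $h_{ij}=g_{ij}-l_il_j$, $c_{ijk}=\frac12\partial g_{ij}/\partial y^k$, $c_i{}^r{}_j=g^{rk}c_{ijk}$, $c_i=g^{jk}c_{ijk}$, $b^i=g^{ij}b_j$, $m_i=b_i-\frac{\beta}{L}l_i$, $m^i=g^{ij}m_j$, $m^2=m_im^i$, $c_\beta=c_ib^i$, $A_\beta=c_\beta+\frac{n+1}{4\,{}^*L}m^2$, $S_{hijk}=c_{ijr}c_h{}^r{}_k-c_{ikr}c_h{}^r{}_j$, $S_{ik}=g^{hj}S_{hijk}$, $S=g^{ik}S_{ik}$. Quantities built from ${}^*L$ by the same formulas (using ${}^*g_{ij}$ and its inverse ${}^*g^{ij}$)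 are denoted with a left asterisk. *)

theory Defs
  imports "HOL-Analysis.Analysis"
begin

text \<open>Everything is formulated in a local chart: points x of an open set U of R^n,
fibre coordinates y in R^n (type real^'n, n = CARD('n)). A Finsler function is
F :: real^'n \<Rightarrow> real^'n \<Rightarrow> real, F x y = L(x,y).
All v-quantities only involve y-derivatives at fixed x.\<close>

definition pd :: "'n::finite \<Rightarrow> (real^'n \<Rightarrow> real) \<Rightarrow> real^'n \<Rightarrow> real" where
  "pd i f y = deriv (\<lambda>t. f (y + t *\<^sub>R axis i 1)) 0"

fun iter_pd :: "'n::finite list \<Rightarrow> (real^'n \<Rightarrow> real) \<Rightarrow> real^'n \<Rightarrow> real" where
  "iter_pd [] f = f"
| "iter_pd (i # is) f = pd i (iter_pd is f)"

definition smooth_on :: "(real^'n::finite) set \<Rightarrow> (real^'n \<Rightarrow> real) \<Rightarrow> bool" where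
  "smooth_on S f \<longleftrightarrow> (\<forall>is. \<forall>y\<in>S. iter_pd is f differentiable (at y))"

definition fund :: "(real^'n::finite \<Rightarrow> real) \<Rightarrow> real^'n \<Rightarrow> real^'n^'n" where
  "fund F y = (\<chi> i j. (1/2) * pd i (pd j (\<lambda>z. (F z)\<^sup>2)) y)"

definition fund_inv :: "(real^'n::finite \<Rightarrow> real) \<Rightarrow> real^'n \<Rightarrow> real^'n^'n" where
  "fund_inv F y = matrix_inv (fund F y)"

definition Finsler_fun :: "(real^'n::finite \<Rightarrow> real) \<Rightarrow> bool" where
  "Finsler_fun F \<longleftrightarrow>
     (\<forall>y. y \<noteq> 0 \<longrightarrow> F y > 0) \<and>
     smooth_on (UNIV - {0}) F \<and>
     (\<forall>y (t::real). t > 0 \<longrightarrow> F (t *\<^sub>R y) = t * F y) \<and>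
     (\<forall>y. y \<noteq> 0 \<longrightarrow> (\<forall>v. v \<noteq> 0 \<longrightarrow> v \<bullet> (fund F y *v v) > 0))"

definition cartan :: "(real^'n::finite \<Rightarrow> real) \<Rightarrow> 'n \<Rightarrow> 'n \<Rightarrow> 'n \<Rightarrow> real^'n \<Rightarrow> real" where
  "cartan F i j k y = (1/2) * pd k (\<lambda>z. fund F z $ i $ j) y"

definition cartan_mixed :: "(real^'n::finite \<Rightarrow> real) \<Rightarrow> 'n \<Rightarrow> 'n \<Rightarrow> 'n \<Rightarrow> real^'n \<Rightarrow> real" where
  "cartan_mixed F i r j y = (\<Sum>k\<in>UNIV. fund_inv F y $ r $ k * cartan F i j k y)"

definition cartan_vec :: "(real^'n::finite \<Rightarrow> real) \<Rightarrow> 'n \<Rightarrow> real^'n \<Rightarrow> real" where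
  "cartan_vec F i y = (\<Sum>j\<in>UNIV. \<Sum>k\<in>UNIV. fund_inv F y $ j $ k * cartan F i j k y)"

definition vcurv :: "(real^'n::finite \<Rightarrow> real) \<Rightarrow> 'n \<Rightarrow> 'n \<Rightarrow> 'n \<Rightarrow> 'n \<Rightarrow> real^'n \<Rightarrow> real" where
  "vcurv F h i j k y = (\<Sum>r\<in>UNIV. cartan F i j r y * cartan_mixed F h r k y
                                  - cartan F i k r y * cartan_mixed F h r j y)"

definition vricci :: "(real^'n::finite \<Rightarrow> real) \<Rightarrow> 'n \<Rightarrow> 'n \<Rightarrow> real^'n \<Rightarrow> real" where
  "vricci F i k y = (\<Sum>h\<in>UNIV. \<Sum>j\<in>UNIV. fund_inv F y $ h $ j * vcurv F h i j k y)"

definition vscalar :: "(real^'n::finite \<Rightarrow> real) \<Rightarrow> real^'n \<Rightarrow> real" where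
  "vscalar F y = (\<Sum>i\<in>UNIV. \<Sum>k\<in>UNIV. fund_inv F y $ i $ k * vricci F i k y)"

definition lvec :: "(real^'n::finite \<Rightarrow> real) \<Rightarrow> real^'n \<Rightarrow> real^'n" where
  "lvec F y = (\<chi> i. pd i F y)"

definition mvec :: "(real^'n::finite \<Rightarrow> real) \<Rightarrow> real^'n \<Rightarrow> real^'n \<Rightarrow> real^'n" where
  "mvec F b y = b - ((b \<bullet> y) / F y) *\<^sub>R lvec F y"

definition msq :: "(real^'n::finite \<Rightarrow> real) \<Rightarrow> real^'n \<Rightarrow> real^'n \<Rightarrow> real" where
  "msq F b y = mvec F b y \<bullet> (fund_inv F y *v mvec F b y)"

definition c_beta :: "(real^'n::finite \<Rightarrow> real) \<Rightarrow> real^'n \<Rightarrow> real^'n \<Rightarrow> real" where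
  "c_beta F b y = (\<Sum>i\<in>UNIV. cartan_vec F i y * (fund_inv F y *v b) $ i)"

definition A_beta :: "(real^'n::finite \<Rightarrow> real) \<Rightarrow> (real^'n \<Rightarrow> real) \<Rightarrow> real^'n \<Rightarrow> real^'n \<Rightarrow> real" where
  "A_beta F Fs b y = c_beta F b y + (real CARD('n) + 1) / (4 * Fs y) * msq F b y"

end

theory Submission
  imports Defs
begin


lemma dirderiv_at:
  fixes f :: "real^'n::finite \<Rightarrow> real"
  assumes "(f has_derivative D) (at (w + s *\<^sub>R v))"
  shows "((\<lambda>t. f (w + t *\<^sub>R v)) has_real_derivative D v) (at s)"
proof -
  have l: "((\<lambda>t::real. w + t *\<^sub>R v) has_derivative (\<lambda>t. t *\<^sub>R v)) (at s)"
    by (auto intro!: derivative_eq_intros)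
  have "((\<lambda>t. f (w + t *\<^sub>R v)) has_derivative (\<lambda>t. D (t *\<^sub>R v))) (at s)"
    using has_derivative_compose[OF l, of f D] assms by simp
  moreover have "\<And>t. D (t *\<^sub>R v) = t * D v"
    using has_derivative_linear[OF assms] by (simp add: linear_cmul)
  ultimately show ?thesis
    by (auto intro: has_derivative_imp_has_field_derivative)
qed

lemma dirderiv:
  fixes f :: "real^'n::finite \<Rightarrow> real"
  assumes "(f has_derivative D) (at z)"
  shows "((\<lambda>t. f (z + t *\<^sub>R v)) has_real_derivative D v) (at 0)"
  using dirderiv_at[of f D z 0 v] assms by simp

lemma pd_hasder:
  fixes f :: "real^'n::finite \<Rightarrow> real"
  assumes "(f has_derivative D) (at z)"
  shows "pd i f z = D (axis i 1)"
  unfolding pd_def using dirderiv[OF assms] by (rule DERIV_imp_deriv)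

lemma pd_DERIV:
  fixes f :: "real^'n::finite \<Rightarrow> real"
  assumes "f differentiable (at (w + s *\<^sub>R axis i 1))"
  shows "((\<lambda>t. f (w + t *\<^sub>R axis i 1)) has_real_derivative pd i f (w + s *\<^sub>R axis i 1)) (at s)"
proof -
  obtain D where D: "(f has_derivative D) (at (w + s *\<^sub>R axis i 1))"
    using assms by (auto simp: differentiable_def)
  show ?thesis using dirderiv_at[OF D] pd_hasder[OF D] by simp
qed

lemma ev_open:
  fixes w :: "real^'n::finite"
  assumes "open S" "w \<in> S"
  shows "eventually (\<lambda>s::real. w + s *\<^sub>R v \<in> S) (nhds 0)"
proof -
  obtain r where r: "r > 0" "ball w r \<subseteq> S" using assms openE by blast
  have "\<forall>s. dist s 0 < r / (norm v + 1) \<longrightarrow> w + s *\<^sub>R v \<in> S"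
  proof (intro allI impI)
    fix s :: real assume "dist s 0 < r / (norm v + 1)"
    then have "\<bar>s\<bar> * (norm v + 1) < r"
      by (simp add: pos_less_divide_eq add_nonneg_pos)
    then have "\<bar>s\<bar> * norm v < r"
      by (smt (verit) abs_ge_zero mult_left_mono norm_ge_zero)
    then have "dist w (w + s *\<^sub>R v) < r" by (simp add: dist_norm)
    then show "w + s *\<^sub>R v \<in> S" using r by auto
  qed
  moreover have "r / (norm v + 1) > 0" using r by (simp add: add_nonneg_pos)
  ultimately show ?thesis unfolding eventually_nhds_metric by blast
qed

lemma pd_local:
  fixes f g :: "real^'n::finite \<Rightarrow> real"
  assumes "open S" "z \<in> S" "\<And>w. w \<in> S \<Longrightarrow> f w = g w"
  shows "pd i f z = pd i g z"
  unfolding pd_def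
  apply (rule deriv_cong_ev[OF _ refl])
  using ev_open[OF assms(1,2), of "axis i 1"] by (auto elim!: eventually_mono simp: assms(3))

lemma pd_mult:
  fixes f g :: "real^'n::finite \<Rightarrow> real"
  assumes "f differentiable (at z)" "g differentiable (at z)"
  shows "pd i (\<lambda>w. f w * g w) z = pd i f z * g z + f z * pd i g z"
proof -
  obtain Df Dg where f: "(f has_derivative Df) (at z)" and g: "(g has_derivative Dg) (at z)"
    using assms by (auto simp: differentiable_def)
  show ?thesis
    using pd_hasder[OF has_derivative_mult[OF f g]] pd_hasder[OF f] pd_hasder[OF g]
    by (simp add: algebra_simps)
qed

lemma pd_add:
  fixes f g :: "real^'n::finite \<Rightarrow> real"
  assumes "f differentiable (at z)" "g differentiable (at z)"
  shows "pd i (\<lambda>w. f w + g w) z = pd i f z + pd i g z"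
proof -
  obtain Df Dg where f: "(f has_derivative Df) (at z)" and g: "(g has_derivative Dg) (at z)"
    using assms by (auto simp: differentiable_def)
  show ?thesis
    using pd_hasder[OF has_derivative_add[OF f g]] pd_hasder[OF f] pd_hasder[OF g]
    by (simp add: algebra_simps)
qed

lemma pd_cmult:
  fixes f :: "real^'n::finite \<Rightarrow> real"
  assumes "f differentiable (at z)"
  shows "pd i (\<lambda>w. c * f w) z = c * pd i f z"
proof -
  obtain Df where f: "(f has_derivative Df) (at z)"
    using assms by (auto simp: differentiable_def)
  show ?thesis
    using pd_hasder[OF has_derivative_mult_right[OF f, of c]] pd_hasder[OF f]
    by (simp add: algebra_simps)
qed

lemma pd_const: "pd i (\<lambda>w. c) z = 0"
  unfolding pd_def by simp

lemma pd_inner: "pd i (\<lambda>w. b \<bullet> w) z = b $ i"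
proof -
  have "((\<lambda>w. b \<bullet> w) has_derivative (\<lambda>w. b \<bullet> w)) (at z)"
    by (auto intro!: derivative_eq_intros)
  from pd_hasder[OF this] show ?thesis by (simp add: inner_axis)
qed

lemma linear_basis_sum:
  fixes D :: "real^'n::finite \<Rightarrow> real"
  assumes "linear D"
  shows "D z = (\<Sum>i\<in>UNIV. z $ i * D (axis i 1))"
proof -
  have "D z = D (\<Sum>i\<in>UNIV. z $ i *\<^sub>R axis i 1)"
    using basis_expansion[of z] by (simp add: scalar_mult_eq_scaleR)
  also have "\<dots> = (\<Sum>i\<in>UNIV. z $ i * D (axis i 1))"
    using assms by (simp add: linear_sum linear_cmul)
  finally show ?thesis .
qed

lemma euler:
  fixes G :: "real^'n::finite \<Rightarrow> real"
  assumes "G differentiable (at z)" "\<And>t. t > 0 \<Longrightarrow> G (t *\<^sub>R z) = t powr k * G z"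
  shows "(\<Sum>i\<in>UNIV. z $ i * pd i G z) = k * G z"
proof -
  obtain D where D: "(G has_derivative D) (at z)"
    using assms by (auto simp: differentiable_def)
  have 1: "((\<lambda>s. G (z + s *\<^sub>R z)) has_real_derivative D z) (at 0)"
    using dirderiv[OF D] .
  have ev: "eventually (\<lambda>s::real. G (z + s *\<^sub>R z) = (1 + s) powr k * G z) (nhds 0)"
  proof -
    have "eventually (\<lambda>s::real. s \<in> {-1<..}) (nhds 0)"
      by (rule eventually_nhds_in_open) auto
    then show ?thesis
    proof (rule eventually_mono)
      fix s :: real assume "s \<in> {-1<..}"
      then have "1 + s > 0" by simp
      then show "G (z + s *\<^sub>R z) = (1 + s) powr k * G z"
        using assms(2)[of "1+s"] by (simp add: algebra_simps)
    qed
  qed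
  have 2: "((\<lambda>s. (1 + s) powr k * G z) has_real_derivative k * G z) (at 0)"
    by (auto intro!: derivative_eq_intros)
  have "D z = k * G z"
    using DERIV_unique[OF 1] 2 DERIV_cong_ev[OF refl ev refl] by blast
  then show ?thesis
    using linear_basis_sum[OF has_derivative_linear[OF D], of z] pd_hasder[OF D] by simp
qed


lemma pd_homog:
  fixes G :: "real^'n::finite \<Rightarrow> real"
  assumes dif: "G differentiable (at z)"
    and hom: "\<And>w t. w \<noteq> 0 \<Longrightarrow> t > 0 \<Longrightarrow> G (t *\<^sub>R w) = t powr k * G w"
    and z: "z \<noteq> 0" and t: "t > 0"
  shows "pd i G (t *\<^sub>R z) = t powr (k - 1) * pd i G z"
proof -
  obtain D where D: "(G has_derivative D) (at z)"
    using dif by (auto simp: differentiable_def)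
  define v where "v = (1/t) *\<^sub>R axis i (1::real)"
  have ev: "eventually (\<lambda>s::real. G (t *\<^sub>R z + s *\<^sub>R axis i 1) = t powr k * G (z + s *\<^sub>R v)) (nhds 0)"
  proof -
    have "eventually (\<lambda>s::real. z + s *\<^sub>R v \<in> UNIV - {0}) (nhds 0)"
      by (rule ev_open) (use z in \<open>auto simp: open_delete\<close>)
    then show ?thesis
  proof (rule eventually_mono)
    fix s assume "z + s *\<^sub>R v \<in> UNIV - {0}"
    then have "z + s *\<^sub>R v \<noteq> 0" by simp
    moreover have "t *\<^sub>R z + s *\<^sub>R axis i 1 = t *\<^sub>R (z + s *\<^sub>R v)"
      using t by (simp add: v_def scaleR_add_right)
    ultimately show "G (t *\<^sub>R z + s *\<^sub>R axis i 1) = t powr k * G (z + s *\<^sub>R v)"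
      using hom t by simp
  qed
  qed
  have 1: "((\<lambda>s. t powr k * G (z + s *\<^sub>R v)) has_real_derivative t powr k * D v) (at 0)"
    using dirderiv[OF D, of v] by (auto intro: DERIV_cmult)
  have "D v = (1/t) * D (axis i 1)"
    using has_derivative_linear[OF D] by (simp add: v_def linear_cmul)
  then have "t powr k * D v = t powr (k - 1) * D (axis i 1)"
    using t by (simp add: powr_diff)
  then have 2: "((\<lambda>s. G (t *\<^sub>R z + s *\<^sub>R axis i 1)) has_real_derivative t powr (k - 1) * D (axis i 1)) (at 0)"
    using DERIV_cong_ev[OF refl ev refl] 1 by simp
  show ?thesis
    unfolding pd_def[of i G "t *\<^sub>R z"] using DERIV_imp_deriv[OF 2] pd_hasder[OF D] by simp
qed

lemma mixed_mvt:
  fixes f :: "real^'n::finite \<Rightarrow> real"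
  assumes h: "h > 0"
    and inS: "\<And>a b. 0 \<le> a \<Longrightarrow> a \<le> h \<Longrightarrow> 0 \<le> b \<Longrightarrow> b \<le> h \<Longrightarrow> z + a *\<^sub>R axis i 1 + b *\<^sub>R axis j 1 \<in> S"
    and df: "\<And>w. w \<in> S \<Longrightarrow> f differentiable (at w)"
    and dfi: "\<And>w. w \<in> S \<Longrightarrow> pd i f differentiable (at w)"
  shows "\<exists>a b. 0 < a \<and> a < h \<and> 0 < b \<and> b < h \<and>
     f (z + h *\<^sub>R axis i 1 + h *\<^sub>R axis j 1) - f (z + h *\<^sub>R axis i 1) - f (z + h *\<^sub>R axis j 1) + f z
       = h * h * pd j (pd i f) (z + a *\<^sub>R axis i 1 + b *\<^sub>R axis j 1)"
proof -
  define e where "e = axis i (1::real)"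
  define d where "d = axis j (1::real)"
  define \<phi> where "\<phi> s = f (z + h *\<^sub>R d + s *\<^sub>R e) - f (z + s *\<^sub>R e)" for s
  have S1: "z + h *\<^sub>R d + s *\<^sub>R e \<in> S" "z + s *\<^sub>R e \<in> S" if "0 \<le> s" "s \<le> h" for s
    using inS[of s h] inS[of s 0] that h by (auto simp: e_def d_def algebra_simps)
  have d\<phi>: "(\<phi> has_real_derivative (pd i f (z + h *\<^sub>R d + s *\<^sub>R e) - pd i f (z + s *\<^sub>R e))) (at s)"
    if "0 \<le> s" "s \<le> h" for s
    unfolding \<phi>_def e_def
    by (intro DERIV_diff pd_DERIV df) (use S1[OF that] in \<open>auto simp: e_def\<close>)
  obtain l a where a: "0 < a" "a < h" "DERIV \<phi> a :> l" "\<phi> h - \<phi> 0 = (h - 0) * l"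
    using MVT[of 0 h \<phi>] h d\<phi>
    by (metis DERIV_isCont continuous_at_imp_continuous_on atLeastAtMost_iff less_eq_real_def
        real_differentiable_def)
  have l: "l = pd i f (z + h *\<^sub>R d + a *\<^sub>R e) - pd i f (z + a *\<^sub>R e)"
    using DERIV_unique[OF a(3) d\<phi>[of a]] a by simp
  define \<psi> where "\<psi> s = pd i f (z + a *\<^sub>R e + s *\<^sub>R d)" for s
  have S2: "z + a *\<^sub>R e + s *\<^sub>R d \<in> S" if "0 \<le> s" "s \<le> h" for s
    using inS[of a s] that a by (auto simp: e_def d_def algebra_simps)
  have d\<psi>: "(\<psi> has_real_derivative pd j (pd i f) (z + a *\<^sub>R e + s *\<^sub>R d)) (at s)"
    if "0 \<le> s" "s \<le> h" for s
    unfolding \<psi>_def d_def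
    by (intro pd_DERIV dfi) (use S2[OF that] in \<open>auto simp: d_def\<close>)
  obtain l2 b where b: "0 < b" "b < h" "DERIV \<psi> b :> l2" "\<psi> h - \<psi> 0 = (h - 0) * l2"
    using MVT[of 0 h \<psi>] h d\<psi>
    by (metis DERIV_isCont continuous_at_imp_continuous_on atLeastAtMost_iff less_eq_real_def
        real_differentiable_def)
  have l2: "l2 = pd j (pd i f) (z + a *\<^sub>R e + b *\<^sub>R d)"
    using DERIV_unique[OF b(3) d\<psi>[of b]] b by simp
  have "l = \<psi> h - \<psi> 0" unfolding l \<psi>_def by (simp add: algebra_simps)
  then have "\<phi> h - \<phi> 0 = h * h * l2" using a(4) b(4) by simp
  then show ?thesis using a b l2
    by (intro exI[of _ a] exI[of _ b]) (simp add: \<phi>_def e_def d_def algebra_simps)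
qed


lemma norm_ab_axis:
  "norm (a *\<^sub>R axis i (1::real) + b *\<^sub>R axis j 1 :: real^'n::finite) \<le> \<bar>a\<bar> + \<bar>b\<bar>"
  by (rule order_trans[OF norm_triangle_ineq]) simp

lemma schwarz:
  fixes f :: "real^'n::finite \<Rightarrow> real"
  assumes S: "open S" "z \<in> S"
    and df: "\<And>w. w \<in> S \<Longrightarrow> f differentiable (at w)"
    and dfi: "\<And>w. w \<in> S \<Longrightarrow> pd i f differentiable (at w)"
    and dfj: "\<And>w. w \<in> S \<Longrightarrow> pd j f differentiable (at w)"
    and cA: "continuous (at z) (pd j (pd i f))"
    and cB: "continuous (at z) (pd i (pd j f))"
  shows "pd j (pd i f) z = pd i (pd j f) z"
proof -
  define A where "A = pd j (pd i f)"
  define B where "B = pd i (pd j f)"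
  obtain r where r: "r > 0" "ball z r \<subseteq> S" using S openE by blast
  have "\<bar>A z - B z\<bar> \<le> 2 * \<epsilon>" if \<epsilon>: "\<epsilon> > 0" for \<epsilon>
  proof -
    obtain d1 where d1: "d1 > 0" "\<And>q. dist q z < d1 \<Longrightarrow> dist (A q) (A z) < \<epsilon>"
      using cA \<epsilon> unfolding continuous_at_eps_delta A_def by blast
    obtain d2 where d2: "d2 > 0" "\<And>q. dist q z < d2 \<Longrightarrow> dist (B q) (B z) < \<epsilon>"
      using cB \<epsilon> unfolding continuous_at_eps_delta B_def by blast
    define h where "h = min r (min d1 d2) / 3"
    have h: "h > 0" "2 * h < r" "2 * h < d1" "2 * h < d2"
      using r d1 d2 by (auto simp: h_def)
    have near: "dist (z + a *\<^sub>R axis k 1 + b *\<^sub>R axis m 1) z \<le> 2 * h"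
      if "0 \<le> a" "a \<le> h" "0 \<le> b" "b \<le> h" for a b and k m :: 'n
    proof -
      have "dist (z + a *\<^sub>R axis k 1 + b *\<^sub>R axis m 1) z = norm (a *\<^sub>R axis k (1::real) + b *\<^sub>R axis m 1)"
        by (simp add: dist_norm)
      also have "\<dots> \<le> \<bar>a\<bar> + \<bar>b\<bar>" by (rule norm_ab_axis)
      finally show ?thesis using that by simp
    qed
    have inS: "z + a *\<^sub>R axis k 1 + b *\<^sub>R axis m 1 \<in> S"
      if "0 \<le> a" "a \<le> h" "0 \<le> b" "b \<le> h" for a b and k m :: 'n
      using near[OF that, of k m] h r by (auto simp: dist_commute)
    obtain a b where ab: "0 < a" "a < h" "0 < b" "b < h"
      "f (z + h *\<^sub>R axis i 1 + h *\<^sub>R axis j 1) - f (z + h *\<^sub>R axis i 1) - f (z + h *\<^sub>R axis j 1) + f z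
       = h * h * A (z + a *\<^sub>R axis i 1 + b *\<^sub>R axis j 1)"
      using mixed_mvt[of h z i j S f, OF h(1) inS df dfi] unfolding A_def by blast
    obtain a' b' where ab': "0 < a'" "a' < h" "0 < b'" "b' < h"
      "f (z + h *\<^sub>R axis j 1 + h *\<^sub>R axis i 1) - f (z + h *\<^sub>R axis j 1) - f (z + h *\<^sub>R axis i 1) + f z
       = h * h * B (z + a' *\<^sub>R axis j 1 + b' *\<^sub>R axis i 1)"
      using mixed_mvt[of h z j i S f, OF h(1) inS df dfj] unfolding B_def by blast
    have "h * h * A (z + a *\<^sub>R axis i 1 + b *\<^sub>R axis j 1) = h * h * B (z + a' *\<^sub>R axis j 1 + b' *\<^sub>R axis i 1)"
      using ab(5) ab'(5) by (simp add: algebra_simps)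
    then have eq: "A (z + a *\<^sub>R axis i 1 + b *\<^sub>R axis j 1) = B (z + a' *\<^sub>R axis j 1 + b' *\<^sub>R axis i 1)"
      using h by simp
    have "dist (A (z + a *\<^sub>R axis i 1 + b *\<^sub>R axis j 1)) (A z) < \<epsilon>"
      using near[of a b i j] ab h by (intro d1(2)) auto
    moreover have "dist (B (z + a' *\<^sub>R axis j 1 + b' *\<^sub>R axis i 1)) (B z) < \<epsilon>"
      using near[of a' b' j i] ab' h by (intro d2(2)) auto
    ultimately show ?thesis using eq unfolding dist_real_def by linarith
  qed
  then have "\<bar>A z - B z\<bar> = 0"
  proof -
    assume H: "\<And>\<epsilon>. \<epsilon> > 0 \<Longrightarrow> \<bar>A z - B z\<bar> \<le> 2 * \<epsilon>"
    show ?thesis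
    proof (rule ccontr)
      assume "\<bar>A z - B z\<bar> \<noteq> 0"
      then have "\<bar>A z - B z\<bar> / 4 > 0" by simp
      from H[OF this] \<open>\<bar>A z - B z\<bar> \<noteq> 0\<close> show False by simp
    qed
  qed
  then show ?thesis by (simp add: A_def B_def)
qed


lemma sum_move_in: "(\<Sum>i\<in>I. y i * (\<Sum>h\<in>H. f i h)) = (\<Sum>h\<in>H. \<Sum>i\<in>I. y i * f i h)"
  for y :: "_ \<Rightarrow> real"
  by (simp add: sum_distrib_left sum.swap[of _ I H])
lemma sum_cfl: "(\<Sum>i\<in>I. y i * (c * g i)) = c * (\<Sum>i\<in>I. y i * g i)"
  for y :: "_ \<Rightarrow> real"
  by (subst sum_distrib_left) (simp add: mult_ac)
lemma sum_cfr: "(\<Sum>i\<in>I. y i * (g i * c)) = (\<Sum>i\<in>I. y i * g i) * c"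
  for y :: "_ \<Rightarrow> real"
  by (subst sum_distrib_right) (simp add: mult_ac)
lemma sum_diff_in: "(\<Sum>i\<in>I. y i * (a i - b i)) = (\<Sum>i\<in>I. y i * a i) - (\<Sum>i\<in>I. y i * b i)"
  for y :: "_ \<Rightarrow> real"
  by (simp add: right_diff_distrib sum_subtractf)

lemmas engine = sum_move_in sum_cfl sum_cfr sum_diff_in

definition SCB3 :: "('n::finite \<Rightarrow> 'n \<Rightarrow> real) \<Rightarrow> ('n \<Rightarrow> 'n \<Rightarrow> real) \<Rightarrow> ('n \<Rightarrow> 'n \<Rightarrow> real)
   \<Rightarrow> ('n \<Rightarrow> 'n \<Rightarrow> 'n \<Rightarrow> real) \<Rightarrow> ('n \<Rightarrow> 'n \<Rightarrow> 'n \<Rightarrow> real) \<Rightarrow> real" where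
  "SCB3 P1 P2 P3 X Z = (\<Sum>i\<in>UNIV. \<Sum>k\<in>UNIV. P1 i k * (\<Sum>h\<in>UNIV. \<Sum>j\<in>UNIV. P2 h j *
      (\<Sum>r\<in>UNIV. X i j r * (\<Sum>s\<in>UNIV. P3 r s * Z h k s) - X i k r * (\<Sum>s\<in>UNIV. P3 r s * Z h j s))))"

definition hor3 :: "real^'n::finite \<Rightarrow> ('n \<Rightarrow> 'n \<Rightarrow> 'n \<Rightarrow> real) \<Rightarrow> bool" where
  "hor3 y X \<longleftrightarrow> (\<forall>j k. (\<Sum>i\<in>UNIV. y$i * X i j k) = 0) \<and> (\<forall>i k. (\<Sum>j\<in>UNIV. y$j * X i j k) = 0)
     \<and> (\<forall>i j. (\<Sum>k\<in>UNIV. y$k * X i j k) = 0)"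

definition hor2 :: "real^'n::finite \<Rightarrow> ('n \<Rightarrow> 'n \<Rightarrow> real) \<Rightarrow> bool" where
  "hor2 y M \<longleftrightarrow> (\<forall>k. (\<Sum>i\<in>UNIV. y$i * M i k) = 0) \<and> (\<forall>i. (\<Sum>k\<in>UNIV. y$k * M i k) = 0)"

definition cswap :: "real^'n::finite \<Rightarrow> ('n \<Rightarrow> 'n \<Rightarrow> real) \<Rightarrow> real \<Rightarrow> ('n \<Rightarrow> 'n \<Rightarrow> real) \<Rightarrow> bool" where
  "cswap y Q a P \<longleftrightarrow> (\<forall>M. hor2 y M \<longrightarrow>
     (\<Sum>i\<in>UNIV. \<Sum>k\<in>UNIV. Q i k * M i k) = a * (\<Sum>i\<in>UNIV. \<Sum>k\<in>UNIV. P i k * M i k))"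


lemma swap_blocks:
  fixes p q :: "_ \<Rightarrow> _ \<Rightarrow> real"
  shows "(\<Sum>i\<in>A. \<Sum>k\<in>B. p i k * (\<Sum>h\<in>C. \<Sum>j\<in>D. q h j * \<Phi> i k h j))
       = (\<Sum>h\<in>C. \<Sum>j\<in>D. q h j * (\<Sum>i\<in>A. \<Sum>k\<in>B. p i k * \<Phi> i k h j))"
proof -
  have "(\<Sum>i\<in>A. \<Sum>k\<in>B. p i k * (\<Sum>h\<in>C. \<Sum>j\<in>D. q h j * \<Phi> i k h j))
      = (\<Sum>i\<in>A. \<Sum>k\<in>B. \<Sum>h\<in>C. \<Sum>j\<in>D. q h j * (p i k * \<Phi> i k h j))"
    by (simp add: sum_distrib_left mult.left_commute)
  also have "\<dots> = (\<Sum>h\<in>C. \<Sum>j\<in>D. \<Sum>i\<in>A. \<Sum>k\<in>B. q h j * (p i k * \<Phi> i k h j))"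
    by (simp only: sum.swap[of _ B C] sum.swap[of _ B D] sum.swap[of _ A C] sum.swap[of _ A D])
  also have "\<dots> = (\<Sum>h\<in>C. \<Sum>j\<in>D. q h j * (\<Sum>i\<in>A. \<Sum>k\<in>B. p i k * \<Phi> i k h j))"
    by (simp add: sum_distrib_left)
  finally show ?thesis .
qed

lemma inner_rs:
  fixes P3 :: "_ \<Rightarrow> _ \<Rightarrow> real"
  shows "(\<Sum>r\<in>R. a r * (\<Sum>s\<in>S. P3 r s * b s) - c r * (\<Sum>s\<in>S. P3 r s * d s))
       = (\<Sum>r\<in>R. \<Sum>s\<in>S. P3 r s * (a r * b s - c r * d s))"
  by (simp add: sum_distrib_left sum_subtractf algebra_simps)

lemma SCB3_form2:
  "SCB3 P1 P2 P3 X Z = (\<Sum>h\<in>UNIV. \<Sum>j\<in>UNIV. P2 h j * (\<Sum>i\<in>UNIV. \<Sum>k\<in>UNIV. P1 i k *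
      (\<Sum>r\<in>UNIV. X i j r * (\<Sum>s\<in>UNIV. P3 r s * Z h k s) - X i k r * (\<Sum>s\<in>UNIV. P3 r s * Z h j s))))"
  unfolding SCB3_def by (rule swap_blocks)

lemma SCB3_form3:
  "SCB3 P1 P2 P3 X Z = (\<Sum>r\<in>UNIV. \<Sum>s\<in>UNIV. P3 r s * (\<Sum>i\<in>UNIV. \<Sum>k\<in>UNIV. P1 i k *
      (\<Sum>h\<in>UNIV. \<Sum>j\<in>UNIV. P2 h j * (X i j r * Z h k s - X i k r * Z h j s))))"
proof -
  have "SCB3 P1 P2 P3 X Z = (\<Sum>i\<in>UNIV. \<Sum>k\<in>UNIV. P1 i k * (\<Sum>h\<in>UNIV. \<Sum>j\<in>UNIV. P2 h j *
      (\<Sum>r\<in>UNIV. \<Sum>s\<in>UNIV. P3 r s * (X i j r * Z h k s - X i k r * Z h j s))))"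
    unfolding SCB3_def inner_rs ..
  also have "\<dots> = (\<Sum>i\<in>UNIV. \<Sum>k\<in>UNIV. P1 i k * (\<Sum>r\<in>UNIV. \<Sum>s\<in>UNIV. P3 r s *
      (\<Sum>h\<in>UNIV. \<Sum>j\<in>UNIV. P2 h j * (X i j r * Z h k s - X i k r * Z h j s))))"
    by (subst swap_blocks) (rule refl)
  also have "\<dots> = (\<Sum>r\<in>UNIV. \<Sum>s\<in>UNIV. P3 r s * (\<Sum>i\<in>UNIV. \<Sum>k\<in>UNIV. P1 i k *
      (\<Sum>h\<in>UNIV. \<Sum>j\<in>UNIV. P2 h j * (X i j r * Z h k s - X i k r * Z h j s))))"
    by (rule swap_blocks)
  finally show ?thesis .
qed

lemma hor_iff: "hor3 y X \<longleftrightarrow> (\<forall>j k. (\<Sum>i\<in>UNIV. y$i * X i j k) = 0) \<and> (\<forall>i k. (\<Sum>j\<in>UNIV. y$j * X i j k) = 0)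
     \<and> (\<forall>i j. (\<Sum>k\<in>UNIV. y$k * X i j k) = 0)" by (simp add: hor3_def)

lemma M1_hor:
  assumes "hor3 y X" "hor3 y Z"
  shows "hor2 y (\<lambda>i k. (\<Sum>h\<in>UNIV. \<Sum>j\<in>UNIV. P2 h j *
      (\<Sum>r\<in>UNIV. X i j r * (\<Sum>s\<in>UNIV. P3 r s * Z h k s) - X i k r * (\<Sum>s\<in>UNIV. P3 r s * Z h j s))))"
  using assms unfolding hor2_def hor3_def
  by (simp only: engine[where y="($) y"]) simp

lemma M2_hor:
  assumes "hor3 y X" "hor3 y Z"
  shows "hor2 y (\<lambda>h j. (\<Sum>i\<in>UNIV. \<Sum>k\<in>UNIV. P1 i k *
      (\<Sum>r\<in>UNIV. X i j r * (\<Sum>s\<in>UNIV. P3 r s * Z h k s) - X i k r * (\<Sum>s\<in>UNIV. P3 r s * Z h j s))))"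
  using assms unfolding hor2_def hor3_def
  by (simp only: engine[where y="($) y"]) simp

lemma M3_hor:
  assumes "hor3 y X" "hor3 y Z"
  shows "hor2 y (\<lambda>r s. (\<Sum>i\<in>UNIV. \<Sum>k\<in>UNIV. P1 i k *
      (\<Sum>h\<in>UNIV. \<Sum>j\<in>UNIV. P2 h j * (X i j r * Z h k s - X i k r * Z h j s))))"
  using assms unfolding hor2_def hor3_def
  by (simp only: engine[where y="($) y"]) simp

lemma SCB3_cswap:
  assumes "cswap y Q a P" "hor3 y X" "hor3 y Z"
  shows "SCB3 Q Q Q X Z = a^3 * SCB3 P P P X Z"
proof -
  have "SCB3 Q Q Q X Z = a * SCB3 P Q Q X Z"
    using assms(1) M1_hor[OF assms(2,3), of Q Q] unfolding cswap_def SCB3_def by blast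
  also have "SCB3 P Q Q X Z = a * SCB3 P P Q X Z"
    using assms(1) M2_hor[OF assms(2,3), of P Q] unfolding cswap_def SCB3_form2 by blast
  also have "SCB3 P P Q X Z = a * SCB3 P P P X Z"
    using assms(1) M3_hor[OF assms(2,3), of P P] unfolding cswap_def SCB3_form3 by blast
  finally show ?thesis by (simp add: power3_eq_cube)
qed


definition T1 :: "('n::finite \<Rightarrow> 'n \<Rightarrow> real) \<Rightarrow> ('n \<Rightarrow> 'n \<Rightarrow> 'n \<Rightarrow> real) \<Rightarrow> ('n \<Rightarrow> 'n \<Rightarrow> 'n \<Rightarrow> real) \<Rightarrow> real" where
  "T1 P X Z = (\<Sum>i\<in>UNIV. \<Sum>k\<in>UNIV. P i k * (\<Sum>h\<in>UNIV. \<Sum>j\<in>UNIV. P h j * (\<Sum>r\<in>UNIV. X i j r * (\<Sum>s\<in>UNIV. P r s * Z h k s))))"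
definition T2 :: "('n::finite \<Rightarrow> 'n \<Rightarrow> real) \<Rightarrow> ('n \<Rightarrow> 'n \<Rightarrow> 'n \<Rightarrow> real) \<Rightarrow> ('n \<Rightarrow> 'n \<Rightarrow> 'n \<Rightarrow> real) \<Rightarrow> real" where
  "T2 P X Z = (\<Sum>i\<in>UNIV. \<Sum>k\<in>UNIV. P i k * (\<Sum>h\<in>UNIV. \<Sum>j\<in>UNIV. P h j * (\<Sum>r\<in>UNIV. X i k r * (\<Sum>s\<in>UNIV. P r s * Z h j s))))"

lemma SCB3_T: "SCB3 P P P X Z = T1 P X Z - T2 P X Z"
  unfolding SCB3_def T1_def T2_def
  by (simp add: right_diff_distrib sum_subtractf)

lemma T1_lin: "T1 P X (\<lambda>h k s. a * Z1 h k s + b * Z2 h k s) = a * T1 P X Z1 + b * T1 P X Z2"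
  unfolding T1_def by (simp add: sum.distrib sum_distrib_left algebra_simps)
lemma T2_lin: "T2 P X (\<lambda>h k s. a * Z1 h k s + b * Z2 h k s) = a * T2 P X Z1 + b * T2 P X Z2"
  unfolding T2_def by (simp add: sum.distrib sum_distrib_left algebra_simps)
lemma T1_linX: "T1 P (\<lambda>h k s. a * Z1 h k s + b * Z2 h k s) X = a * T1 P Z1 X + b * T1 P Z2 X"
  unfolding T1_def by (simp add: sum.distrib sum_distrib_left algebra_simps)
lemma T2_linX: "T2 P (\<lambda>h k s. a * Z1 h k s + b * Z2 h k s) X = a * T2 P Z1 X + b * T2 P Z2 X"
  unfolding T2_def by (simp add: sum.distrib sum_distrib_left algebra_simps)

lemma T1a_gen:
  fixes P :: "_ \<Rightarrow> _ \<Rightarrow> real"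
  shows "(\<Sum>i\<in>I. \<Sum>k\<in>K. P i k * (\<Sum>h\<in>Hs. \<Sum>j\<in>J. P h j * (\<Sum>r\<in>R. X i j r * (\<Sum>s\<in>S. P r s * (H h k * m s)))))
   = (\<Sum>i\<in>I. \<Sum>j\<in>J. \<Sum>r\<in>R. X i j r * (\<Sum>s\<in>S. P r s * m s) * (\<Sum>k\<in>K. \<Sum>h\<in>Hs. P i k * P h j * H h k))"
  by (simp add: sum_distrib_left sum_distrib_right sum.swap[of _ K I] sum.swap[of _ Hs I] sum.swap[of _ J I] sum.swap[of _ R I] sum.swap[of _ S I] sum.swap[of _ Hs K] sum.swap[of _ J K] sum.swap[of _ R K] sum.swap[of _ S K] sum.swap[of _ J Hs] sum.swap[of _ R Hs] sum.swap[of _ S Hs] sum.swap[of _ R J] sum.swap[of _ S J] sum.swap[of _ S R] mult_ac)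


lemma delta_sum:
  fixes f g :: "'n::finite \<Rightarrow> real"
  shows "(\<Sum>k\<in>UNIV. f k * (((if j = k then 1 else 0) - g k) / c)) = (f j - (\<Sum>k\<in>UNIV. f k * g k)) / c"
proof -
  have "(\<Sum>k\<in>UNIV. f k * (((if j = k then 1 else 0) - g k) / c))
      = (\<Sum>k\<in>UNIV. (if j = k then f k / c else 0) - f k * g k / c)"
    by (rule sum.cong) (auto simp: diff_divide_distrib right_diff_distrib)
  also have "\<dots> = f j / c - (\<Sum>k\<in>UNIV. f k * g k) / c"
    by (simp add: sum_subtractf sum_divide_distrib)
  finally show ?thesis by (simp add: diff_divide_distrib)
qed

lemma delta_sum':
  fixes f g :: "'n::finite \<Rightarrow> real"
  shows "(\<Sum>k\<in>UNIV. f k * (((if k = j then 1 else 0) - g k) / c)) = (f j - (\<Sum>k\<in>UNIV. f k * g k)) / c"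
  using delta_sum[of f j g c] by (simp add: eq_commute[of j])

locale core =
  fixes y :: "real^'n::finite" and Fy :: real and l m :: "real^'n"
    and H :: "'n \<Rightarrow> 'n \<Rightarrow> real" and P :: "'n \<Rightarrow> 'n \<Rightarrow> real"
  assumes Fy: "Fy > 0"
    and Hsym: "\<And>i j. H i j = H j i"
    and Psym: "\<And>i j. P i j = P j i"
    and PH: "\<And>i k. (\<Sum>j\<in>UNIV. P i j * H j k) = ((if i = k then 1 else 0) - y$i * l$k / Fy) / Fy"
    and Pl: "\<And>i. (\<Sum>j\<in>UNIV. P i j * l$j) = y$i / Fy"
    and ly: "(\<Sum>i\<in>UNIV. y$i * l$i) = Fy"
    and my: "(\<Sum>i\<in>UNIV. y$i * m$i) = 0"
    and Hy: "\<And>i. (\<Sum>j\<in>UNIV. y$j * H i j) = 0"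
begin

definition K :: "'n \<Rightarrow> 'n \<Rightarrow> 'n \<Rightarrow> real" where
  "K i j k = H i j * m$k + H j k * m$i + H i k * m$j"
definition tr :: "('n \<Rightarrow> 'n \<Rightarrow> 'n \<Rightarrow> real) \<Rightarrow> 'n \<Rightarrow> real" where
  "tr X r = (\<Sum>i\<in>UNIV. \<Sum>j\<in>UNIV. P i j * X i j r)"
definition Pm :: "'n \<Rightarrow> real" where
  "Pm r = (\<Sum>s\<in>UNIV. P r s * m$s)"

definition Q :: "'n \<Rightarrow> 'n \<Rightarrow> real" where
  "Q i j = (P i j - y$i * y$j / Fy^2) / Fy"

lemma Rp: "(\<Sum>k\<in>UNIV. \<Sum>h\<in>UNIV. P i k * P h j * H h k) = Q i j"
proof -
  have "(\<Sum>k\<in>UNIV. \<Sum>h\<in>UNIV. P i k * P h j * H h k) = (\<Sum>k\<in>UNIV. P i k * (\<Sum>h\<in>UNIV. P j h * H h k))"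
    by (simp add: sum_distrib_left mult.assoc Psym[of _ j])
  also have "\<dots> = (\<Sum>k\<in>UNIV. P i k * (((if j = k then 1 else 0) - y$j * l$k / Fy) / Fy))"
    by (simp add: PH)
  also have "\<dots> = (P i j - (\<Sum>k\<in>UNIV. P i k * (y$j * l$k / Fy))) / Fy"
    by (rule delta_sum)
  also have "\<dots> = (P i j - y$j * (\<Sum>k\<in>UNIV. P i k * l$k) / Fy) / Fy"
    by (simp add: sum_distrib_left sum_divide_distrib mult_ac)
  also have "\<dots> = Q i j"
    unfolding Q_def using Fy by (simp only: Pl) (simp add: power2_eq_square field_simps)
  finally show ?thesis .
qed


lemma lin2:
  fixes A B :: "_ \<Rightarrow> _ \<Rightarrow> real"
  shows "(\<Sum>i\<in>I. \<Sum>j\<in>J. a * A i j - b * B i j) = a * (\<Sum>i\<in>I. \<Sum>j\<in>J. A i j) - b * (\<Sum>i\<in>I. \<Sum>j\<in>J. B i j)"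
  by (simp add: sum_subtractf sum_distrib_left)

lemma Qswap:
  assumes "hor2 y M"
  shows "(\<Sum>i\<in>UNIV. \<Sum>j\<in>UNIV. Q i j * M i j) = (1/Fy) * (\<Sum>i\<in>UNIV. \<Sum>j\<in>UNIV. P i j * M i j)"
proof -
  have "(\<Sum>i\<in>UNIV. \<Sum>j\<in>UNIV. Q i j * M i j)
     = (\<Sum>i\<in>UNIV. \<Sum>j\<in>UNIV. (1/Fy) * (P i j * M i j) - (1/Fy^3) * (y$i * (y$j * M i j)))"
    unfolding Q_def using Fy
    by (intro sum.cong refl) (simp add: field_simps power2_eq_square power3_eq_cube)
  also have "\<dots> = (1/Fy) * (\<Sum>i\<in>UNIV. \<Sum>j\<in>UNIV. P i j * M i j)
       - (1/Fy^3) * (\<Sum>i\<in>UNIV. \<Sum>j\<in>UNIV. y$i * (y$j * M i j))"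
    by (rule lin2)
  also have "(\<Sum>i\<in>UNIV. \<Sum>j\<in>UNIV. y$i * (y$j * M i j)) = (\<Sum>j\<in>UNIV. y$j * (\<Sum>i\<in>UNIV. y$i * M i j))"
  proof -
    have "(\<Sum>i\<in>I. \<Sum>j\<in>J. y$i * (y$j * M i j)) = (\<Sum>j\<in>J. y$j * (\<Sum>i\<in>I. y$i * M i j))" for I J
      by (simp add: sum_distrib_left sum.swap[of _ J I] mult.left_commute)
    then show ?thesis by blast
  qed
  also have "\<dots> = 0"
    using assms unfolding hor2_def by simp
  finally show ?thesis by simp
qed

lemma T1_Ka:
  assumes X: "hor3 y X"
  shows "T1 P X (\<lambda>h k s. H h k * m$s) = (1/Fy) * (\<Sum>r\<in>UNIV. tr X r * Pm r)"
proof -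
  have "T1 P X (\<lambda>h k s. H h k * m$s)
      = (\<Sum>i\<in>UNIV. \<Sum>j\<in>UNIV. \<Sum>r\<in>UNIV. X i j r * Pm r * Q i j)"
    unfolding T1_def T1a_gen Rp Pm_def ..
  also have "\<dots> = (\<Sum>i\<in>UNIV. \<Sum>j\<in>UNIV. Q i j * (\<Sum>r\<in>UNIV. X i j r * Pm r))"
    by (simp add: sum_distrib_left mult_ac)
  also have "\<dots> = (1/Fy) * (\<Sum>i\<in>UNIV. \<Sum>j\<in>UNIV. P i j * (\<Sum>r\<in>UNIV. X i j r * Pm r))"
  proof (rule Qswap)
    show "hor2 y (\<lambda>i j. \<Sum>r\<in>UNIV. X i j r * Pm r)"
      using X unfolding hor2_def hor3_def by (simp only: engine[where y="($) y"]) simp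
  qed
  also have "(\<Sum>i\<in>UNIV. \<Sum>j\<in>UNIV. P i j * (\<Sum>r\<in>UNIV. X i j r * Pm r)) = (\<Sum>r\<in>UNIV. tr X r * Pm r)"
  proof -
    have "(\<Sum>i\<in>I. \<Sum>j\<in>J. P i j * (\<Sum>r\<in>R. X i j r * Pm r))
       = (\<Sum>r\<in>R. (\<Sum>i\<in>I. \<Sum>j\<in>J. P i j * X i j r) * Pm r)" for I J R
      by (simp add: sum_distrib_left sum_distrib_right sum.swap[of _ R I] sum.swap[of _ R J] mult_ac)
    then show ?thesis unfolding tr_def by blast
  qed
  finally show ?thesis .
qed

definition symX :: "('n \<Rightarrow> 'n \<Rightarrow> 'n \<Rightarrow> real) \<Rightarrow> bool" where
  "symX X \<longleftrightarrow> (\<forall>i j k. X i j k = X j i k \<and> X i j k = X i k j)"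

lemma symX_13: "symX X \<Longrightarrow> X i j r = X r j i"
  unfolding symX_def by metis
lemma symX_23: "symX X \<Longrightarrow> X i j r = X i r j"
  unfolding symX_def by metis

lemma Rp_b: "(\<Sum>k\<in>UNIV. \<Sum>s\<in>UNIV. P i k * P r s * H k s) = Q i r"
proof -
  have e: "P i k * P r s * H k s = P i k * P s r * H s k" for k s
    by (simp only: Psym[of r s] Hsym[of k s])
  have "(\<Sum>k\<in>UNIV. \<Sum>s\<in>UNIV. P i k * P r s * H k s) = (\<Sum>k\<in>UNIV. \<Sum>s\<in>UNIV. P i k * P s r * H s k)"
    by (simp only: e)
  also have "\<dots> = Q i r" by (rule Rp)
  finally show ?thesis .
qed

lemma T1_Kb:
  assumes X: "hor3 y X" "symX X"
  shows "T1 P X (\<lambda>h k s. H k s * m$h) = (1/Fy) * (\<Sum>r\<in>UNIV. tr X r * Pm r)"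
proof -
  have g: "(\<Sum>i\<in>I. \<Sum>k\<in>K. P i k * (\<Sum>h\<in>Hs. \<Sum>j\<in>J. P h j * (\<Sum>r\<in>R. X i j r * (\<Sum>s\<in>S. P r s * (H k s * m$h)))))
    = (\<Sum>i\<in>I. \<Sum>j\<in>J. \<Sum>r\<in>R. X i j r * (\<Sum>h\<in>Hs. P h j * m$h) * (\<Sum>k\<in>K. \<Sum>s\<in>S. P i k * P r s * H k s))"
    for I K Hs J R S
    by (simp add: sum_distrib_left sum_distrib_right sum.swap[of _ K I] sum.swap[of _ Hs I] sum.swap[of _ J I] sum.swap[of _ R I] sum.swap[of _ S I] sum.swap[of _ Hs K] sum.swap[of _ J K] sum.swap[of _ R K] sum.swap[of _ S K] sum.swap[of _ J Hs] sum.swap[of _ R Hs] sum.swap[of _ S Hs] sum.swap[of _ R J] sum.swap[of _ S J] sum.swap[of _ S R] mult_ac)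
  have q: "(\<Sum>k\<in>UNIV. \<Sum>s\<in>UNIV. P i k * P r s * H k s) = Q i r" for i r
    by (rule Rp_b)
  have pm: "(\<Sum>h\<in>UNIV. P h j * m$h) = Pm j" for j
    unfolding Pm_def by (intro sum.cong refl arg_cong2[where f="(*)"] Psym)
  have "T1 P X (\<lambda>h k s. H k s * m$h) = (\<Sum>i\<in>UNIV. \<Sum>j\<in>UNIV. \<Sum>r\<in>UNIV. X i j r * Pm j * Q i r)"
    unfolding T1_def g q pm ..
  also have "\<dots> = (\<Sum>i\<in>UNIV. \<Sum>r\<in>UNIV. Q i r * (\<Sum>j\<in>UNIV. X i j r * Pm j))"
  proof -
    have "(\<Sum>i\<in>I. \<Sum>j\<in>J. \<Sum>r\<in>R. X i j r * Pm j * Q i r) = (\<Sum>i\<in>I. \<Sum>r\<in>R. Q i r * (\<Sum>j\<in>J. X i j r * Pm j))" for I J R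
      by (simp add: sum_distrib_left sum.swap[of _ R J] mult_ac)
    then show ?thesis .
  qed
  also have "\<dots> = (1/Fy) * (\<Sum>i\<in>UNIV. \<Sum>r\<in>UNIV. P i r * (\<Sum>j\<in>UNIV. X i j r * Pm j))"
  proof (rule Qswap)
    show "hor2 y (\<lambda>i r. \<Sum>j\<in>UNIV. X i j r * Pm j)"
      using X(1) unfolding hor2_def hor3_def by (simp only: engine[where y="($) y"]) simp
  qed
  also have "(\<Sum>i\<in>UNIV. \<Sum>r\<in>UNIV. P i r * (\<Sum>j\<in>UNIV. X i j r * Pm j)) = (\<Sum>j\<in>UNIV. tr X j * Pm j)"
  proof -
    have "(\<Sum>i\<in>I. \<Sum>r\<in>R. P i r * (\<Sum>j\<in>J. X i j r * Pm j))
       = (\<Sum>j\<in>J. (\<Sum>i\<in>I. \<Sum>r\<in>R. P i r * X i j r) * Pm j)" for I J R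
      by (simp add: sum_distrib_left sum_distrib_right sum.swap[of _ J I] sum.swap[of _ J R] mult_ac)
    moreover have "(\<Sum>i\<in>UNIV. \<Sum>r\<in>UNIV. P i r * X i j r) = tr X j" for j
      unfolding tr_def by (intro sum.cong refl arg_cong2[where f="(*)"] symX_23[OF X(2)])
    ultimately show ?thesis by simp
  qed
  finally show ?thesis .
qed

lemma T1_Kc:
  assumes X: "hor3 y X" "symX X"
  shows "T1 P X (\<lambda>h k s. H h s * m$k) = (1/Fy) * (\<Sum>r\<in>UNIV. tr X r * Pm r)"
proof -
  have g: "(\<Sum>i\<in>I. \<Sum>k\<in>K. P i k * (\<Sum>h\<in>Hs. \<Sum>j\<in>J. P h j * (\<Sum>r\<in>R. X i j r * (\<Sum>s\<in>S. P r s * (H h s * m$k)))))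
    = (\<Sum>i\<in>I. \<Sum>j\<in>J. \<Sum>r\<in>R. X i j r * (\<Sum>k\<in>K. P i k * m$k) * (\<Sum>s\<in>S. \<Sum>h\<in>Hs. P r s * P h j * H h s))"
    for I K Hs J R S
    by (simp add: sum_distrib_left sum_distrib_right sum.swap[of _ K I] sum.swap[of _ Hs I] sum.swap[of _ J I] sum.swap[of _ R I] sum.swap[of _ S I] sum.swap[of _ Hs K] sum.swap[of _ J K] sum.swap[of _ R K] sum.swap[of _ S K] sum.swap[of _ J Hs] sum.swap[of _ R Hs] sum.swap[of _ S Hs] sum.swap[of _ R J] sum.swap[of _ S J] sum.swap[of _ S R] mult_ac)
  have q: "(\<Sum>s\<in>UNIV. \<Sum>h\<in>UNIV. P r s * P h j * H h s) = Q r j" for r j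
    by (rule Rp)
  have pm: "(\<Sum>k\<in>UNIV. P i k * m$k) = Pm i" for i
    unfolding Pm_def ..
  have "T1 P X (\<lambda>h k s. H h s * m$k) = (\<Sum>i\<in>UNIV. \<Sum>j\<in>UNIV. \<Sum>r\<in>UNIV. X i j r * Pm i * Q r j)"
    unfolding T1_def g q pm ..
  also have "\<dots> = (\<Sum>r\<in>UNIV. \<Sum>j\<in>UNIV. Q r j * (\<Sum>i\<in>UNIV. X i j r * Pm i))"
  proof -
    have "(\<Sum>i\<in>I. \<Sum>j\<in>J. \<Sum>r\<in>R. X i j r * Pm i * Q r j) = (\<Sum>r\<in>R. \<Sum>j\<in>J. Q r j * (\<Sum>i\<in>I. X i j r * Pm i))" for I J R
      by (simp add: sum_distrib_left sum.swap[of _ I J] sum.swap[of _ I R] sum.swap[of _ J R] mult_ac)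
    then show ?thesis .
  qed
  also have "\<dots> = (1/Fy) * (\<Sum>r\<in>UNIV. \<Sum>j\<in>UNIV. P r j * (\<Sum>i\<in>UNIV. X i j r * Pm i))"
  proof (rule Qswap)
    show "hor2 y (\<lambda>r j. \<Sum>i\<in>UNIV. X i j r * Pm i)"
      using X(1) unfolding hor2_def hor3_def by (simp only: engine[where y="($) y"]) simp
  qed
  also have "(\<Sum>r\<in>UNIV. \<Sum>j\<in>UNIV. P r j * (\<Sum>i\<in>UNIV. X i j r * Pm i)) = (\<Sum>i\<in>UNIV. tr X i * Pm i)"
  proof -
    have "(\<Sum>r\<in>R. \<Sum>j\<in>J. P r j * (\<Sum>i\<in>I. X i j r * Pm i))
       = (\<Sum>i\<in>I. (\<Sum>r\<in>R. \<Sum>j\<in>J. P r j * X i j r) * Pm i)" for I J R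
      by (simp add: sum_distrib_left sum_distrib_right sum.swap[of _ R I] sum.swap[of _ J I] mult_ac)
    moreover have "(\<Sum>r\<in>UNIV. \<Sum>j\<in>UNIV. P r j * X i j r) = tr X i" for i
      unfolding tr_def by (intro sum.cong refl arg_cong2[where f="(*)"] symX_13[OF X(2)])
    ultimately show ?thesis by simp
  qed
  finally show ?thesis .
qed

lemma T2_gen: "T2 P X Z = (\<Sum>r\<in>UNIV. tr X r * (\<Sum>s\<in>UNIV. P r s * tr Z s))"
proof -
  have "(\<Sum>i\<in>I. \<Sum>k\<in>K. P i k * (\<Sum>h\<in>Hs. \<Sum>j\<in>J. P h j * (\<Sum>r\<in>R. X i k r * (\<Sum>s\<in>S. P r s * Z h j s))))
     = (\<Sum>r\<in>R. (\<Sum>i\<in>I. \<Sum>k\<in>K. P i k * X i k r) * (\<Sum>s\<in>S. P r s * (\<Sum>h\<in>Hs. \<Sum>j\<in>J. P h j * Z h j s)))"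
    for I K Hs J R S
    by (simp add: sum_distrib_left sum_distrib_right sum.swap[of _ K I] sum.swap[of _ Hs I] sum.swap[of _ J I] sum.swap[of _ R I] sum.swap[of _ S I] sum.swap[of _ Hs K] sum.swap[of _ J K] sum.swap[of _ R K] sum.swap[of _ S K] sum.swap[of _ J Hs] sum.swap[of _ R Hs] sum.swap[of _ S Hs] sum.swap[of _ R J] sum.swap[of _ S J] sum.swap[of _ S R] mult_ac)
  then show ?thesis unfolding T2_def tr_def .
qed

lemma trH: "(\<Sum>h\<in>UNIV. \<Sum>j\<in>UNIV. P h j * H h j) = (real CARD('n) - 1) / Fy"
proof -
  have "(\<Sum>h\<in>UNIV. \<Sum>j\<in>UNIV. P h j * H h j) = (\<Sum>h\<in>UNIV. ((if h = h then 1 else 0) - y$h * l$h / Fy) / Fy)"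
    by (intro sum.cong refl) (subst Hsym, simp add: PH)
  also have "\<dots> = (real CARD('n) - (\<Sum>h\<in>UNIV. y$h * l$h) / Fy) / Fy"
    by (simp add: sum_subtractf sum_divide_distrib[symmetric] diff_divide_distrib)
  finally show ?thesis using ly Fy by simp
qed

lemma Em: "(\<Sum>h\<in>UNIV. m$h * (\<Sum>j\<in>UNIV. P h j * H j s)) = m$s / Fy"
proof -
  have "(\<Sum>h\<in>UNIV. m$h * (\<Sum>j\<in>UNIV. P h j * H j s)) = (\<Sum>h\<in>UNIV. m$h * (((if h = s then 1 else 0) - y$h * l$s / Fy) / Fy))"
    by (simp add: PH)
  also have "\<dots> = (m$s - (\<Sum>h\<in>UNIV. m$h * (y$h * l$s / Fy))) / Fy"
    by (rule delta_sum')
  also have "(\<Sum>h\<in>UNIV. m$h * (y$h * l$s / Fy)) = (\<Sum>h\<in>UNIV. y$h * m$h) * (l$s / Fy)"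
    by (subst sum_distrib_right) (simp add: mult_ac)
  finally show ?thesis using my by simp
qed

lemma trK: "tr K s = (real CARD('n) + 1) / Fy * m$s"
proof -
  have "tr K s = m$s * (\<Sum>h\<in>UNIV. \<Sum>j\<in>UNIV. P h j * H h j)
     + (\<Sum>h\<in>UNIV. m$h * (\<Sum>j\<in>UNIV. P h j * H j s))
     + (\<Sum>j\<in>UNIV. m$j * (\<Sum>h\<in>UNIV. P j h * H h s))"
  proof -
    have "(\<Sum>h\<in>I. \<Sum>j\<in>J. P h j * (H h j * m$s + H j s * m$h + H h s * m$j))
      = m$s * (\<Sum>h\<in>I. \<Sum>j\<in>J. P h j * H h j)
     + (\<Sum>h\<in>I. m$h * (\<Sum>j\<in>J. P h j * H j s))
     + (\<Sum>j\<in>J. m$j * (\<Sum>h\<in>I. P h j * H h s))" for I J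
      by (simp add: sum.distrib sum_distrib_left distrib_left sum.swap[of _ J I] mult_ac)
    moreover have "(\<Sum>h\<in>UNIV. P h j * H h s) = (\<Sum>h\<in>UNIV. P j h * H h s)" for j
    proof -
      have e: "P h j * H h s = P j h * H h s" for h by (simp only: Psym[of h j])
      show ?thesis by (simp only: e)
    qed
    ultimately show ?thesis unfolding tr_def K_def by simp
  qed
  also have "\<dots> = (real CARD('n) + 1) / Fy * m$s"
    unfolding trH Em using Fy by (simp add: field_simps)
  finally show ?thesis .
qed

lemma T1_add3: "T1 P X (\<lambda>h k s. A h k s + B h k s + C h k s) = T1 P X A + T1 P X B + T1 P X C"
  unfolding T1_def by (simp add: sum.distrib distrib_left)

lemma K_fun: "K = (\<lambda>h k s. H h k * m$s + H k s * m$h + H h s * m$k)"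
  by (intro ext) (simp add: K_def)

lemma XK:
  assumes X: "hor3 y X" "symX X"
  shows "SCB3 P P P X K = (2 - real CARD('n)) / Fy * (\<Sum>r\<in>UNIV. tr X r * Pm r)"
proof -
  have "T1 P X K = 3 / Fy * (\<Sum>r\<in>UNIV. tr X r * Pm r)"
    unfolding K_fun T1_add3 T1_Ka[OF X(1)] T1_Kb[OF X] T1_Kc[OF X] by simp
  moreover have "T2 P X K = (real CARD('n) + 1) / Fy * (\<Sum>r\<in>UNIV. tr X r * Pm r)"
  proof -
    have "T2 P X K = (\<Sum>r\<in>UNIV. tr X r * (\<Sum>s\<in>UNIV. P r s * ((real CARD('n) + 1) / Fy * m$s)))"
      unfolding T2_gen trK ..
    also have "\<dots> = (real CARD('n) + 1) / Fy * (\<Sum>r\<in>UNIV. tr X r * Pm r)"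
      unfolding Pm_def by (simp add: sum_distrib_left mult_ac)
    finally show ?thesis .
  qed
  ultimately show ?thesis unfolding SCB3_T using Fy by (simp add: field_simps)
qed

lemma T1_sym: "T1 P X Z = T1 P Z X"
proof -
  have g: "(\<Sum>i\<in>I. \<Sum>k\<in>K. P i k * (\<Sum>h\<in>Hs. \<Sum>j\<in>J. P h j * (\<Sum>r\<in>R. X i j r * (\<Sum>s\<in>S. P r s * Z h k s))))
    = (\<Sum>h\<in>Hs. \<Sum>j\<in>J. P h j * (\<Sum>i\<in>I. \<Sum>k\<in>K. P i k * (\<Sum>s\<in>S. Z h k s * (\<Sum>r\<in>R. P r s * X i j r))))"
    for I K Hs J R S
    by (simp add: sum_distrib_left sum_distrib_right sum.swap[of _ K I] sum.swap[of _ Hs I] sum.swap[of _ J I] sum.swap[of _ R I] sum.swap[of _ S I] sum.swap[of _ Hs K] sum.swap[of _ J K] sum.swap[of _ R K] sum.swap[of _ S K] sum.swap[of _ J Hs] sum.swap[of _ R Hs] sum.swap[of _ S Hs] sum.swap[of _ R J] sum.swap[of _ S J] sum.swap[of _ S R] mult_ac)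
  have e: "(\<Sum>r\<in>UNIV. P r s * X i j r) = (\<Sum>r\<in>UNIV. P s r * X i j r)" for s i j
    by (intro sum.cong refl arg_cong2[where f="(*)"] Psym)
  show ?thesis unfolding T1_def g by (simp only: e)
qed

lemma T2_sym: "T2 P X Z = T2 P Z X"
proof -
  have g: "(\<Sum>i\<in>I. \<Sum>k\<in>K. P i k * (\<Sum>h\<in>Hs. \<Sum>j\<in>J. P h j * (\<Sum>r\<in>R. X i k r * (\<Sum>s\<in>S. P r s * Z h j s))))
    = (\<Sum>h\<in>Hs. \<Sum>j\<in>J. P h j * (\<Sum>i\<in>I. \<Sum>k\<in>K. P i k * (\<Sum>s\<in>S. Z h j s * (\<Sum>r\<in>R. P r s * X i k r))))"
    for I K Hs J R S
    by (simp add: sum_distrib_left sum_distrib_right sum.swap[of _ K I] sum.swap[of _ Hs I] sum.swap[of _ J I] sum.swap[of _ R I] sum.swap[of _ S I] sum.swap[of _ Hs K] sum.swap[of _ J K] sum.swap[of _ R K] sum.swap[of _ S K] sum.swap[of _ J Hs] sum.swap[of _ R Hs] sum.swap[of _ S Hs] sum.swap[of _ R J] sum.swap[of _ S J] sum.swap[of _ S R] mult_ac)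
  have e: "(\<Sum>r\<in>UNIV. P r s * X i k r) = (\<Sum>r\<in>UNIV. P s r * X i k r)" for s i k
    by (intro sum.cong refl arg_cong2[where f="(*)"] Psym)
  show ?thesis unfolding T2_def g by (simp only: e)
qed

lemma SCB_sym: "SCB3 P P P X Z = SCB3 P P P Z X"
  unfolding SCB3_T T1_sym[of X Z] T2_sym[of X Z] ..

lemma SCB_bilin:
  "SCB3 P P P (\<lambda>i j k. a * X i j k + b * Z i j k) (\<lambda>i j k. a * X i j k + b * Z i j k)
   = a^2 * SCB3 P P P X X + 2 * a * b * SCB3 P P P X Z + b^2 * SCB3 P P P Z Z"
proof -
  have "SCB3 P P P (\<lambda>i j k. a * X i j k + b * Z i j k) (\<lambda>i j k. a * X i j k + b * Z i j k)
     = a * (a * SCB3 P P P X X + b * SCB3 P P P X Z) + b * (a * SCB3 P P P Z X + b * SCB3 P P P Z Z)"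
    unfolding SCB3_T T1_lin T2_lin T1_linX T2_linX by (simp add: algebra_simps)
  then show ?thesis using SCB_sym[of Z X] by (simp add: algebra_simps power2_eq_square)
qed

lemma Hy': "(\<Sum>i\<in>UNIV. y$i * H i j) = 0"
proof -
  have "(\<Sum>i\<in>UNIV. y$i * H i j) = (\<Sum>i\<in>UNIV. y$i * H j i)"
    by (intro sum.cong refl arg_cong2[where f="(*)"] Hsym)
  then show ?thesis using Hy by simp
qed

lemma sum_add_in: "(\<Sum>i\<in>I. w i * (a i + b i)) = (\<Sum>i\<in>I. w i * a i) + (\<Sum>i\<in>I. w i * b i)"
  for w :: "_ \<Rightarrow> real"
  by (simp add: distrib_left sum.distrib)

lemma K_hor: "hor3 y K"
  unfolding hor3_def K_def
  by (simp only: engine[where y="($) y"] sum_add_in[where w="($) y"] Hy Hy' my) simp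

lemma K_sym: "symX K"
  unfolding symX_def K_def
  apply (intro allI conjI)
  subgoal for i j k by (simp add: Hsym[of j i] algebra_simps)
  subgoal for i j k by (simp add: Hsym[of k j] algebra_simps)
  done

lemma cross_sum: "(\<Sum>r\<in>UNIV. tr K r * Pm r) = (real CARD('n) + 1) / Fy * (\<Sum>r\<in>UNIV. m$r * Pm r)"
  unfolding trK by (simp add: sum_distrib_left mult_ac)

end


lemma inv_props:
  fixes A :: "real^'n::finite^'n"
  assumes pd: "\<And>v. v \<noteq> 0 \<Longrightarrow> v \<bullet> (A *v v) > 0"
  shows "matrix_inv A ** A = mat 1" "A ** matrix_inv A = mat 1"
proof -
  have "\<forall>x. A *v x = 0 \<longrightarrow> x = 0"
    using pd by (metis inner_zero_right less_irrefl)
  then obtain B where B: "B ** A = mat 1" using matrix_left_invertible_ker by blast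
  then have "A ** B = mat 1" using matrix_left_right_inverse by blast
  then have "\<exists>A'. A ** A' = mat 1 \<and> A' ** A = mat 1" using B by blast
  then have "A ** matrix_inv A = mat 1 \<and> matrix_inv A ** A = mat 1"
    unfolding matrix_inv_def by (rule someI_ex)
  then show "matrix_inv A ** A = mat 1" "A ** matrix_inv A = mat 1" by auto
qed

lemma inv_sym:
  fixes A B :: "real^'n::finite^'n"
  assumes "A ** B = mat 1" "B ** A = mat 1" "transpose A = A"
  shows "transpose B = B"
proof -
  have "transpose B ** A = mat 1"
    by (metis assms(1,3) matrix_transpose_mul transpose_mat)
  then have "transpose B = (transpose B ** A) ** B"
    by (metis assms(1) matrix_mul_assoc matrix_mul_rid)
  then show ?thesis using \<open>transpose B ** A = mat 1\<close> by simp
qed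

lemma mm_entry: "(A ** B) $ i $ k = (\<Sum>j\<in>UNIV. A$i$j * B$j$k)"
  by (simp add: matrix_matrix_mult_def)
lemma mv_entry: "(A *v v) $ i = (\<Sum>j\<in>UNIV. A$i$j * v$j)"
  by (simp add: matrix_vector_mult_def)
lemma mat1_entry: "(mat 1 :: real^'n::finite^'n) $ i $ k = (if i = k then 1 else 0)"
  by (simp add: mat_def)

locale lin =
  fixes y :: "real^'n::finite" and Fy e :: real and l b :: "real^'n"
    and H :: "'n \<Rightarrow> 'n \<Rightarrow> real"
  assumes Fy: "Fy > 0" and e: "e > 0"
    and Hsym: "\<And>i j. H i j = H j i"
    and Hy: "\<And>i. (\<Sum>j\<in>UNIV. y$j * H i j) = 0"
    and ly: "(\<Sum>i\<in>UNIV. y$i * l$i) = Fy"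
    and Ls: "e * Fy + b \<bullet> y > 0"
    and gpd: "\<And>v. v \<noteq> 0 \<Longrightarrow> v \<bullet> ((\<chi> i j. Fy * H i j + l$i * l$j) *v v) > 0"
    and gspd: "\<And>v. v \<noteq> 0 \<Longrightarrow> v \<bullet> ((\<chi> i j. (e * Fy + b \<bullet> y) * (e * H i j)
                 + (e * l$i + b$i) * (e * l$j + b$j)) *v v) > 0"
begin

definition "g = (\<chi> i j. Fy * H i j + l$i * l$j)"
definition "Lsy = e * Fy + b \<bullet> y"
definition "ls = e *\<^sub>R l + b"
definition "gs = (\<chi> i j. (e * Fy + b \<bullet> y) * (e * H i j) + (e * l$i + b$i) * (e * l$j + b$j))"
definition "Pm = matrix_inv g"
definition "Psm = matrix_inv gs"
definition "\<tau> = e * Lsy / Fy"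
definition "mv = b - ((b \<bullet> y) / Fy) *\<^sub>R l"

lemma gs_ls: "gs = (\<chi> i j. Lsy * (e * H i j) + ls$i * ls$j)"
  unfolding gs_def Lsy_def ls_def by simp

lemma gpd': "v \<noteq> 0 \<Longrightarrow> v \<bullet> (g *v v) > 0"
  unfolding g_def by (rule gpd)
lemma gspd': "v \<noteq> 0 \<Longrightarrow> v \<bullet> (gs *v v) > 0"
  unfolding gs_def by (rule gspd)
lemma PG: "Pm ** g = mat 1"
  unfolding Pm_def by (rule inv_props(1)[OF gpd'])
lemma GP: "g ** Pm = mat 1"
  unfolding Pm_def by (rule inv_props(2)[OF gpd'])
lemma PsG: "Psm ** gs = mat 1"
  unfolding Psm_def by (rule inv_props(1)[OF gspd'])
lemma GPs: "gs ** Psm = mat 1"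
  unfolding Psm_def by (rule inv_props(2)[OF gspd'])

lemma Psym: "Pm$i$j = Pm$j$i"
proof -
  have "transpose g = g" unfolding g_def transpose_def vec_eq_iff
  proof (intro allI)
    fix i j
    show "(\<chi> i j. (\<chi> i j. Fy * H i j + l $ i * l $ j) $ j $ i) $ i $ j = (\<chi> i j. Fy * H i j + l $ i * l $ j) $ i $ j"
      using Hsym[of j i] by (simp add: mult.commute)
  qed
  then have "transpose Pm = Pm" using inv_sym[OF GP PG] by simp
  moreover have "transpose Pm $ j $ i = Pm $ i $ j" by (simp add: transpose_def)
  ultimately show ?thesis by simp
qed

lemma Hy': "(\<Sum>j\<in>UNIV. H i j * y$j) = 0"
  using Hy[of i] by (simp add: mult.commute)

lemma gy: "g *v y = Fy *\<^sub>R l"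
proof -
  have "(g *v y)$i = Fy * l$i" for i
  proof -
    have "(g *v y)$i = (\<Sum>j\<in>UNIV. Fy * (H i j * y$j) + l$i * (y$j * l$j))"
      unfolding g_def mv_entry by (intro sum.cong refl) (simp add: algebra_simps)
    also have "\<dots> = Fy * l$i"
      by (simp add: sum.distrib sum_distrib_left[symmetric] Hy' ly)
    finally show ?thesis .
  qed
  then show ?thesis by (simp add: vec_eq_iff)
qed

lemma Pl: "(\<Sum>j\<in>UNIV. Pm$i$j * l$j) = y$i / Fy"
proof -
  have "Pm *v (g *v y) = y" by (simp add: matrix_vector_mul_assoc PG)
  then have "(Pm *v (Fy *\<^sub>R l))$i = y$i" unfolding gy by simp
  moreover have "(Pm *v (Fy *\<^sub>R l))$i = Fy * (\<Sum>j\<in>UNIV. Pm$i$j * l$j)"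
    unfolding mv_entry by (simp add: sum_distrib_left mult.left_commute)
  ultimately show ?thesis using Fy by (simp add: field_simps)
qed

lemma PH: "(\<Sum>j\<in>UNIV. Pm$i$j * H j k) = ((if i = k then 1 else 0) - y$i * l$k / Fy) / Fy"
proof -
  have "(Pm ** g)$i$k = Fy * (\<Sum>j\<in>UNIV. Pm$i$j * H j k) + (\<Sum>j\<in>UNIV. Pm$i$j * l$j) * l$k"
    unfolding mm_entry g_def
    by (simp add: sum.distrib sum_distrib_left sum_distrib_right algebra_simps)
  then have "Fy * (\<Sum>j\<in>UNIV. Pm$i$j * H j k) + y$i / Fy * l$k = (if i = k then 1 else 0)"
    unfolding PG Pl by (simp add: mat1_entry)
  then show ?thesis using Fy by (simp add: field_simps)
qed

lemma my: "(\<Sum>i\<in>UNIV. y$i * mv$i) = 0"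
proof -
  have "(\<Sum>i\<in>UNIV. y$i * mv$i) = (\<Sum>i\<in>UNIV. y$i * b$i) - (b \<bullet> y) / Fy * (\<Sum>i\<in>UNIV. y$i * l$i)"
    unfolding mv_def by (simp add: right_diff_distrib sum_subtractf sum_distrib_left mult.left_commute)
  moreover have "b \<bullet> y = (\<Sum>i\<in>UNIV. y$i * b$i)"
    unfolding inner_vec_def by (simp add: mult.commute)
  ultimately show ?thesis using ly Fy by simp
qed

lemma core: "core y Fy l mv H (\<lambda>i j. Pm$i$j)"
  by unfold_locales (rule Fy Hsym Psym PH Pl ly my Hy)+

definition "wv = Pm *v ls"

lemma Lsy_pos: "Lsy > 0" unfolding Lsy_def using Ls .
lemma tau_pos: "\<tau> > 0" unfolding \<tau>_def using e Lsy_pos Fy by simp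

lemma gsP: "(gs ** Pm)$j$k = \<tau> * (if j = k then 1 else 0) - \<tau> * l$j * y$k / Fy + ls$j * wv$k"
proof -
  have "(gs ** Pm)$j$k = Lsy * e * (\<Sum>a\<in>UNIV. Pm$k$a * H a j) + ls$j * (\<Sum>a\<in>UNIV. Pm$k$a * ls$a)"
  proof -
    have "(gs ** Pm)$j$k = (\<Sum>a\<in>UNIV. Lsy * e * (Pm$k$a * H a j) + ls$j * (Pm$k$a * ls$a))"
      unfolding mm_entry gs_ls
      by (intro sum.cong refl) (simp add: Psym[of _ k] Hsym[of j] algebra_simps)
    then show ?thesis by (simp add: sum.distrib sum_distrib_left)
  qed
  also have "\<dots> = Lsy * e * (((if k = j then 1 else 0) - y$k * l$j / Fy) / Fy) + ls$j * wv$k"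
    unfolding PH wv_def mv_entry ..
  also have "\<dots> = \<tau> * (if j = k then 1 else 0) - \<tau> * l$j * y$k / Fy + ls$j * wv$k"
    unfolding \<tau>_def using Fy by (auto simp: field_simps)
  finally show ?thesis .
qed

lemma lsy: "(\<Sum>j\<in>UNIV. ls$j * y$j) = Lsy"
proof -
  have "(\<Sum>j\<in>UNIV. ls$j * y$j) = e * (\<Sum>j\<in>UNIV. y$j * l$j) + (\<Sum>j\<in>UNIV. b$j * y$j)"
    unfolding ls_def by (simp add: algebra_simps sum.distrib sum_distrib_left)
  also have "(\<Sum>j\<in>UNIV. b$j * y$j) = b \<bullet> y" unfolding inner_vec_def by simp
  finally show ?thesis unfolding Lsy_def ly .
qed

lemma gsy: "gs *v y = Lsy *\<^sub>R ls"
proof -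
  have "(gs *v y)$i = Lsy * ls$i" for i
  proof -
    have "(gs *v y)$i = (\<Sum>j\<in>UNIV. Lsy * e * (H i j * y$j) + ls$i * (ls$j * y$j))"
      unfolding gs_ls mv_entry by (intro sum.cong refl) (simp add: algebra_simps)
    also have "\<dots> = ls$i * Lsy"
      by (simp add: sum.distrib sum_distrib_left[symmetric] Hy' lsy)
    finally show ?thesis by simp
  qed
  then show ?thesis by (simp add: vec_eq_iff)
qed

lemma Psls: "(\<Sum>j\<in>UNIV. Psm$i$j * ls$j) = y$i / Lsy"
proof -
  have "Psm *v (gs *v y) = y" by (simp add: matrix_vector_mul_assoc PsG)
  then have "(Psm *v (Lsy *\<^sub>R ls))$i = y$i" unfolding gsy by simp
  moreover have "(Psm *v (Lsy *\<^sub>R ls))$i = Lsy * (\<Sum>j\<in>UNIV. Psm$i$j * ls$j)"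
    unfolding mv_entry by (simp add: sum_distrib_left mult.left_commute)
  ultimately show ?thesis using Lsy_pos by (simp add: field_simps)
qed

lemma Ps_explicit:
  "Psm$i$k = Pm$i$k / \<tau> + (Psm *v l)$i * y$k / Fy - (y$i / Lsy) * wv$k / \<tau>"
proof -
  define cc where "cc = \<tau> * y$k / Fy"
  have "Psm ** (gs ** Pm) = Pm" by (simp add: matrix_mul_assoc PsG)
  then have "Pm$i$k = (\<Sum>j\<in>UNIV. Psm$i$j * (gs ** Pm)$j$k)"
    by (metis mm_entry)
  also have "\<dots> = (\<Sum>j\<in>UNIV. \<tau> * (if j = k then Psm$i$j else 0) - cc * (Psm$i$j * l$j) + wv$k * (Psm$i$j * ls$j))"
    unfolding gsP cc_def by (intro sum.cong refl) (auto simp: algebra_simps)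
  also have "\<dots> = \<tau> * Psm$i$k - cc * (\<Sum>j\<in>UNIV. Psm$i$j * l$j) + wv$k * (y$i / Lsy)"
    by (simp only: sum.distrib sum_subtractf sum_distrib_left[symmetric] Psls) simp
  also have "(\<Sum>j\<in>UNIV. Psm$i$j * l$j) = (Psm *v l)$i" by (simp add: mv_entry)
  finally show ?thesis using tau_pos Fy unfolding cc_def by (simp add: field_simps)
qed

lemma cswap: "cswap y (\<lambda>i j. Psm$i$j) (1/\<tau>) (\<lambda>i j. Pm$i$j)"
  unfolding cswap_def
proof (intro allI impI)
  fix M assume M: "hor2 y M"
  define A where "A i = (Psm *v l)$i / Fy" for i
  define B where "B k = wv$k / (\<tau> * Lsy)" for k
  define c where "c = 1 / \<tau>"
  have e: "Psm$i$k * M i k = c * (Pm$i$k * M i k) + A i * (y$k * M i k) - B k * (y$i * M i k)" for i k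
    unfolding Ps_explicit A_def B_def c_def using tau_pos Fy Lsy_pos by (simp add: field_simps)
  have "(\<Sum>i\<in>I. \<Sum>k\<in>K. c * (Pm$i$k * M i k) + A i * (y$k * M i k) - B k * (y$i * M i k))
      = c * (\<Sum>i\<in>I. \<Sum>k\<in>K. Pm$i$k * M i k)
      + (\<Sum>i\<in>I. A i * (\<Sum>k\<in>K. y$k * M i k))
      - (\<Sum>k\<in>K. B k * (\<Sum>i\<in>I. y$i * M i k))" for I K
    by (simp add: sum.distrib sum_subtractf sum_distrib_left sum.swap[of _ K I])
  then have "(\<Sum>i\<in>UNIV. \<Sum>k\<in>UNIV. Psm$i$k * M i k)
      = c * (\<Sum>i\<in>UNIV. \<Sum>k\<in>UNIV. Pm$i$k * M i k)
      + (\<Sum>i\<in>UNIV. A i * (\<Sum>k\<in>UNIV. y$k * M i k))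
      - (\<Sum>k\<in>UNIV. B k * (\<Sum>i\<in>UNIV. y$i * M i k))" unfolding e .
  also have "\<dots> = c * (\<Sum>i\<in>UNIV. \<Sum>k\<in>UNIV. Pm$i$k * M i k)"
    using M unfolding hor2_def by simp
  finally show "(\<Sum>i\<in>UNIV. \<Sum>k\<in>UNIV. Psm$i$k * M i k) = (1/\<tau>) * (\<Sum>i\<in>UNIV. \<Sum>k\<in>UNIV. Pm$i$k * M i k)"
    unfolding c_def .
qed

end


abbreviation "NZ \<equiv> (UNIV - {0::real^'n::finite})"

lemma open_NZ: "open (UNIV - {0::real^'n::finite})"
  by (simp add: open_delete)

lemma iter_pd_append: "iter_pd (is @ [j]) f = iter_pd is (pd j f)"
  by (induction "is") auto

lemma smooth_pd: "smooth_on S f \<Longrightarrow> smooth_on S (pd j f)"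
  unfolding smooth_on_def by (metis iter_pd_append)

lemma sm0: "smooth_on S G \<Longrightarrow> w \<in> S \<Longrightarrow> G differentiable (at w)"
  unfolding smooth_on_def by (metis iter_pd.simps(1))
lemma sm1: "smooth_on S G \<Longrightarrow> w \<in> S \<Longrightarrow> pd j G differentiable (at w)"
  unfolding smooth_on_def by (metis iter_pd.simps)
lemma sm2: "smooth_on S G \<Longrightarrow> w \<in> S \<Longrightarrow> pd i (pd j G) differentiable (at w)"
  unfolding smooth_on_def by (metis iter_pd.simps)
lemma sm3: "smooth_on S G \<Longrightarrow> w \<in> S \<Longrightarrow> pd k (pd i (pd j G)) differentiable (at w)"
  unfolding smooth_on_def by (metis iter_pd.simps)

lemma fund_formula:
  fixes G :: "real^'n::finite \<Rightarrow> real"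
  assumes sm: "smooth_on NZ G" and z: "z \<noteq> 0"
  shows "fund G z $ i $ j = G z * pd i (pd j G) z + pd i G z * pd j G z"
proof -
  have zS: "z \<in> NZ" using z by simp
  have 1: "pd j (\<lambda>w. (G w)\<^sup>2) w = 2 * (G w * pd j G w)" if "w \<in> NZ" for w
  proof -
    have "pd j (\<lambda>w. (G w)\<^sup>2) w = pd j (\<lambda>w. G w * G w) w"
      by (simp add: power2_eq_square)
    also have "\<dots> = pd j G w * G w + G w * pd j G w"
      by (rule pd_mult) (use sm0[OF sm that] in auto)
    finally show ?thesis by simp
  qed
  have "pd i (pd j (\<lambda>w. (G w)\<^sup>2)) z = pd i (\<lambda>w. 2 * (G w * pd j G w)) z"
    by (rule pd_local[OF open_NZ zS 1])
  also have "\<dots> = 2 * pd i (\<lambda>w. G w * pd j G w) z"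
    by (rule pd_cmult) (use sm0[OF sm zS] sm1[OF sm zS] in auto)
  also have "pd i (\<lambda>w. G w * pd j G w) z = pd i G z * pd j G z + G z * pd i (pd j G) z"
    by (rule pd_mult) (use sm0[OF sm zS] sm1[OF sm zS] in auto)
  finally show ?thesis unfolding fund_def by simp
qed

lemma cartan_formula:
  fixes G :: "real^'n::finite \<Rightarrow> real"
  assumes sm: "smooth_on NZ G" and z: "z \<noteq> 0"
  shows "cartan G i j k z = (1/2) * (pd k G z * pd i (pd j G) z + G z * pd k (pd i (pd j G)) z
            + pd k (pd i G) z * pd j G z + pd i G z * pd k (pd j G) z)"
proof -
  have zS: "z \<in> NZ" using z by simp
  have "pd k (\<lambda>w. fund G w $ i $ j) z = pd k (\<lambda>w. G w * pd i (pd j G) w + pd i G w * pd j G w) z"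
    by (rule pd_local[OF open_NZ zS]) (simp add: fund_formula[OF sm])
  also have "\<dots> = pd k (\<lambda>w. G w * pd i (pd j G) w) z + pd k (\<lambda>w. pd i G w * pd j G w) z"
    by (rule pd_add) (use sm0[OF sm zS] sm1[OF sm zS] sm2[OF sm zS] in auto)
  also have "pd k (\<lambda>w. G w * pd i (pd j G) w) z = pd k G z * pd i (pd j G) z + G z * pd k (pd i (pd j G)) z"
    by (rule pd_mult) (use sm0[OF sm zS] sm2[OF sm zS] in auto)
  also have "pd k (\<lambda>w. pd i G w * pd j G w) z = pd k (pd i G) z * pd j G z + pd i G z * pd k (pd j G) z"
    by (rule pd_mult) (use sm1[OF sm zS] in auto)
  finally show ?thesis unfolding cartan_def by (simp add: algebra_simps)
qed

lemma sym2:
  fixes G :: "real^'n::finite \<Rightarrow> real"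
  assumes sm: "smooth_on NZ G" and z: "z \<noteq> 0"
  shows "pd i (pd j G) z = pd j (pd i G) z"
proof -
  have zS: "z \<in> NZ" using z by simp
  show ?thesis
    by (rule schwarz[OF open_NZ zS])
       (use sm0[OF sm] sm1[OF sm] sm2[OF sm] zS in \<open>auto intro: differentiable_imp_continuous_within\<close>)
qed

lemma sym3a:
  fixes G :: "real^'n::finite \<Rightarrow> real"
  assumes sm: "smooth_on NZ G" and z: "z \<noteq> 0"
  shows "pd k (pd i (pd j G)) z = pd k (pd j (pd i G)) z"
  by (rule pd_local[OF open_NZ]) (use z sym2[OF sm] in auto)

lemma sym3b:
  fixes G :: "real^'n::finite \<Rightarrow> real"
  assumes sm: "smooth_on NZ G" and z: "z \<noteq> 0"
  shows "pd k (pd i (pd j G)) z = pd i (pd k (pd j G)) z"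
  using sym2[OF smooth_pd[OF sm] z, of i k] by simp


lemma Fin_sm: "Finsler_fun F \<Longrightarrow> smooth_on NZ F"
  unfolding Finsler_fun_def by blast

lemma Fin_hom: "Finsler_fun F \<Longrightarrow> w \<noteq> 0 \<Longrightarrow> t > 0 \<Longrightarrow> F (t *\<^sub>R w) = t powr 1 * F w"
  unfolding Finsler_fun_def by (simp add: powr_one)

lemma pd1_hom:
  assumes "Finsler_fun F" "w \<noteq> 0" "t > 0"
  shows "pd j F (t *\<^sub>R w) = t powr 0 * pd j F w"
  using pd_homog[of F w 1 t j] sm0[OF Fin_sm[OF assms(1)], of w] Fin_hom[OF assms(1)] assms by simp

lemma pd2_hom:
  assumes "Finsler_fun F" "w \<noteq> 0" "t > 0"
  shows "pd i (pd j F) (t *\<^sub>R w) = t powr (-1) * pd i (pd j F) w"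
  using pd_homog[of "pd j F" w 0 t i] sm1[OF Fin_sm[OF assms(1)], of w] pd1_hom[OF assms(1)] assms by simp

lemma euler1:
  assumes "Finsler_fun F" "y \<noteq> 0"
  shows "(\<Sum>i\<in>UNIV. y$i * pd i F y) = F y"
proof -
  have d: "F differentiable (at y)" using sm0[OF Fin_sm[OF assms(1)], of y] assms(2) by simp
  have h: "\<And>t. t > 0 \<Longrightarrow> F (t *\<^sub>R y) = t powr 1 * F y" using Fin_hom[OF assms] .
  show ?thesis using euler[OF d h] by simp
qed

lemma euler2:
  assumes "Finsler_fun F" "y \<noteq> 0"
  shows "(\<Sum>k\<in>UNIV. y$k * pd k (pd i F) y) = 0"
proof -
  have d: "pd i F differentiable (at y)" using sm1[OF Fin_sm[OF assms(1)], of y] assms(2) by simp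
  have h: "\<And>t. t > 0 \<Longrightarrow> pd i F (t *\<^sub>R y) = t powr 0 * pd i F y" using pd1_hom[OF assms] .
  show ?thesis using euler[OF d h] by simp
qed

lemma euler3:
  assumes "Finsler_fun F" "y \<noteq> 0"
  shows "(\<Sum>k\<in>UNIV. y$k * pd k (pd i (pd j F)) y) = - pd i (pd j F) y"
proof -
  have d: "pd i (pd j F) differentiable (at y)" using sm2[OF Fin_sm[OF assms(1)], of y] assms(2) by simp
  have h: "\<And>t. t > 0 \<Longrightarrow> pd i (pd j F) (t *\<^sub>R y) = t powr (-1) * pd i (pd j F) y" using pd2_hom[OF assms] .
  show ?thesis using euler[OF d h] by simp
qed

lemma Ls1:
  assumes "Finsler_fun F" "w \<noteq> 0"
  shows "pd i (\<lambda>v. e * F v + b \<bullet> v) w = e * pd i F w + b$i"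
proof -
  have d: "F differentiable (at w)" using sm0[OF Fin_sm[OF assms(1)], of w] assms(2) by simp
  have "pd i (\<lambda>v. e * F v + b \<bullet> v) w = pd i (\<lambda>v. e * F v) w + pd i (\<lambda>v. b \<bullet> v) w"
    by (rule pd_add) (use d in \<open>auto intro!: derivative_intros\<close>)
  also have "\<dots> = e * pd i F w + b$i"
    using pd_cmult[OF d] pd_inner by simp
  finally show ?thesis .
qed

lemma Ls2:
  assumes "Finsler_fun F" "z \<noteq> 0"
  shows "pd i (pd j (\<lambda>v. e * F v + b \<bullet> v)) z = e * pd i (pd j F) z"
proof -
  have "pd i (pd j (\<lambda>v. e * F v + b \<bullet> v)) z = pd i (\<lambda>w. e * pd j F w + b$j) z"
    by (rule pd_local[OF open_NZ]) (use assms Ls1[OF assms(1)] in auto)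
  also have "\<dots> = pd i (\<lambda>w. e * pd j F w) z + pd i (\<lambda>w. b$j) z"
    by (rule pd_add) (use sm1[OF Fin_sm[OF assms(1)], of z] assms(2) in auto)
  also have "\<dots> = e * pd i (pd j F) z"
    using pd_cmult[OF sm1[OF Fin_sm[OF assms(1)], of z]] assms(2) pd_const by simp
  finally show ?thesis .
qed

lemma Ls3:
  assumes "Finsler_fun F" "z \<noteq> 0"
  shows "pd k (pd i (pd j (\<lambda>v. e * F v + b \<bullet> v))) z = e * pd k (pd i (pd j F)) z"
proof -
  have "pd k (pd i (pd j (\<lambda>v. e * F v + b \<bullet> v))) z = pd k (\<lambda>w. e * pd i (pd j F) w) z"
    by (rule pd_local[OF open_NZ]) (use assms Ls2[OF assms(1)] in auto)
  also have "\<dots> = e * pd k (pd i (pd j F)) z"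
    using pd_cmult[OF sm2[OF Fin_sm[OF assms(1)], of z]] assms(2) by simp
  finally show ?thesis .
qed


lemma hor3_lin:
  assumes "hor3 y X" "hor3 y Z"
  shows "hor3 y (\<lambda>i j k. a * X i j k + c * Z i j k)"
  using assms unfolding hor3_def
  by (simp add: distrib_left sum.distrib sum_distrib_left[symmetric] mult.left_commute)

lemma symX_hor3:
  assumes s: "\<And>i j k. X i j k = X j i k" "\<And>i j k. X i j k = X i k j"
    and h: "\<And>i j. (\<Sum>k\<in>UNIV. y$k * X i j k) = 0"
  shows "hor3 y X"
proof -
  have a: "(\<Sum>i\<in>UNIV. y$i * X i j k) = 0" for j k
  proof -
    have "(\<Sum>i\<in>UNIV. y$i * X i j k) = (\<Sum>i\<in>UNIV. y$i * X j k i)"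
      by (intro sum.cong refl arg_cong2[where f="(*)"]) (metis s)
    then show ?thesis using h by simp
  qed
  have b: "(\<Sum>i\<in>UNIV. y$i * X j i k) = 0" for j k
  proof -
    have "(\<Sum>i\<in>UNIV. y$i * X j i k) = (\<Sum>i\<in>UNIV. y$i * X j k i)"
      by (intro sum.cong refl arg_cong2[where f="(*)"]) (metis s)
    then show ?thesis using h by simp
  qed
  show ?thesis unfolding hor3_def using a b h by blast
qed

lemma vscalar_SCB:
  "vscalar G y = SCB3 (\<lambda>i j. fund_inv G y $ i $ j) (\<lambda>i j. fund_inv G y $ i $ j) (\<lambda>i j. fund_inv G y $ i $ j)
      (\<lambda>i j k. cartan G i j k y) (\<lambda>i j k. cartan G i j k y)"
  unfolding vscalar_def vricci_def vcurv_def cartan_mixed_def SCB3_def ..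


lemma final_arith:
  fixes e Fy Ls S X1 X2 n :: real
  assumes "e > 0" "Fy > 0" "Ls > 0"
  shows "(1/(e*Ls/Fy))^3 * ((e*Ls/Fy)^2 * S + 2*(e*Ls/Fy)*(e/2)*((2-n)/Fy*X1)
      + (e/2)^2*((2-n)/Fy*((n+1)/Fy*X2)))
    = 1/(e*Ls/Fy) * (S - (n-2)/Ls * (X1 + (n+1)/(4*Ls) * X2))"
  using assms by (simp add: field_simps power2_eq_square power3_eq_cube)

theorem lemma4:
  fixes U :: "(real^'n::finite) set"
    and L :: "real^'n \<Rightarrow> real^'n \<Rightarrow> real"
    and \<sigma> :: "real^'n \<Rightarrow> real"
    and b :: "real^'n \<Rightarrow> real^'n"
  assumes "open U"
    and "\<And>x. x \<in> U \<Longrightarrow> Finsler_fun (L x)"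
    and "\<And>x. x \<in> U \<Longrightarrow> Finsler_fun (\<lambda>y. exp (\<sigma> x) * L x y + b x \<bullet> y)"
    and "x \<in> U" and "y \<noteq> 0"
  shows "let Ls = (\<lambda>v. exp (\<sigma> x) * L x v + b x \<bullet> v);
             \<tau> = exp (\<sigma> x) * Ls y / L x y
         in vscalar Ls y
            = (1 / \<tau>) * (vscalar (L x) y
                 - (real CARD('n) - 2) / Ls y * A_beta (L x) Ls (b x) y)"
proof -
  define F where "F = L x"
  define e where "e = exp (\<sigma> x)"
  define bb where "bb = b x"
  define Ls where "Ls = (\<lambda>v. e * F v + bb \<bullet> v)"
  have FF: "Finsler_fun F" unfolding F_def using assms(2,4) by blast
  have LF: "Finsler_fun Ls" unfolding Ls_def e_def F_def bb_def using assms(3,4) by blast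
  have y: "y \<noteq> 0" by (rule assms(5))
  have e: "e > 0" unfolding e_def by simp
  define Fy where "Fy = F y"
  define l where "l = lvec F y"
  define H where "H i j = pd i (pd j F) y" for i j
  define T where "T k i j = pd k (pd i (pd j F)) y" for k i j
  have lE: "l$i = pd i F y" for i unfolding l_def lvec_def by simp
  have Fy: "Fy > 0" unfolding Fy_def using FF y unfolding Finsler_fun_def by blast
  have LsE: "Ls y = e * Fy + bb \<bullet> y" unfolding Ls_def Fy_def ..
  have Lsp: "e * Fy + bb \<bullet> y > 0" using LF y unfolding LsE[symmetric] Finsler_fun_def by blast
  have smF: "smooth_on NZ F" by (rule Fin_sm[OF FF])
  have smL: "smooth_on NZ Ls" by (rule Fin_sm[OF LF])
  have Hsym: "H i j = H j i" for i j unfolding H_def by (rule sym2[OF smF y])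
  have Tsym1: "T k i j = T k j i" for k i j unfolding T_def by (rule sym3a[OF smF y])
  have Tsym2: "T k i j = T i k j" for k i j unfolding T_def by (rule sym3b[OF smF y])
  have Hy: "(\<Sum>j\<in>UNIV. y$j * H i j) = 0" for i
  proof -
    have "(\<Sum>j\<in>UNIV. y$j * H i j) = (\<Sum>j\<in>UNIV. y$j * pd j (pd i F) y)"
      unfolding H_def by (intro sum.cong refl arg_cong2[where f="(*)"] sym2[OF smF y])
    then show ?thesis using euler2[OF FF y] by simp
  qed
  have ly: "(\<Sum>i\<in>UNIV. y$i * l$i) = Fy" unfolding lE Fy_def by (rule euler1[OF FF y])
  have Ty: "(\<Sum>k\<in>UNIV. y$k * T k i j) = - H i j" for i j unfolding T_def H_def by (rule euler3[OF FF y])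
  have fundF: "fund F y = (\<chi> i j. Fy * H i j + l$i * l$j)"
    unfolding vec_eq_iff by (simp add: fund_formula[OF smF y] H_def lE Fy_def)
  have Ls1y: "pd i Ls y = e * l$i + bb$i" for i unfolding Ls_def lE by (rule Ls1[OF FF y])
  have Ls2y: "pd i (pd j Ls) y = e * H i j" for i j unfolding Ls_def H_def by (rule Ls2[OF FF y])
  have Ls3y: "pd k (pd i (pd j Ls)) y = e * T k i j" for k i j unfolding Ls_def T_def by (rule Ls3[OF FF y])
  have fundLs: "fund Ls y = (\<chi> i j. (e * Fy + bb \<bullet> y) * (e * H i j) + (e * l$i + bb$i) * (e * l$j + bb$j))"
    unfolding vec_eq_iff by (simp add: fund_formula[OF smL y] Ls1y Ls2y LsE)
  have cF: "cartan F i j k y = (1/2) * (l$k * H i j + Fy * T k i j + H k i * l$j + l$i * H k j)" for i j k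
    by (simp add: cartan_formula[OF smF y] lE H_def T_def Fy_def)
  have cLs: "cartan Ls i j k y = (1/2) * ((e * l$k + bb$k) * (e * H i j) + (e * Fy + bb \<bullet> y) * (e * T k i j)
      + (e * H k i) * (e * l$j + bb$j) + (e * l$i + bb$i) * (e * H k j))" for i j k
    by (simp add: cartan_formula[OF smL y] Ls1y Ls2y Ls3y LsE)
  have gpd: "v \<bullet> ((\<chi> i j. Fy * H i j + l$i * l$j) *v v) > 0" if "v \<noteq> 0" for v
  proof -
    have "\<forall>y. y \<noteq> 0 \<longrightarrow> (\<forall>v. v \<noteq> 0 \<longrightarrow> v \<bullet> (fund F y *v v) > 0)"
      using FF unfolding Finsler_fun_def by (elim conjE)
    then have "v \<bullet> (fund F y *v v) > 0" using y that by blast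
    then show ?thesis unfolding fundF .
  qed
  have gspd: "v \<bullet> ((\<chi> i j. (e * Fy + bb \<bullet> y) * (e * H i j) + (e * l$i + bb$i) * (e * l$j + bb$j)) *v v) > 0"
    if "v \<noteq> 0" for v
  proof -
    have "\<forall>y. y \<noteq> 0 \<longrightarrow> (\<forall>v. v \<noteq> 0 \<longrightarrow> v \<bullet> (fund Ls y *v v) > 0)"
      using LF unfolding Finsler_fun_def by (elim conjE)
    then have "v \<bullet> (fund Ls y *v v) > 0" using y that by blast
    then show ?thesis unfolding fundLs .
  qed
  interpret Li: lin y Fy e l bb H
    by unfold_locales (fact Fy e Hsym Hy ly Lsp gpd gspd)+
  interpret Co: core y Fy l Li.mv H "\<lambda>i j. Li.Pm$i$j" by (rule Li.core)
  have Pm_eq: "Li.Pm = fund_inv F y" unfolding Li.Pm_def Li.g_def fund_inv_def fundF ..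
  have Psm_eq: "Li.Psm = fund_inv Ls y" unfolding Li.Psm_def Li.gs_def fund_inv_def fundLs ..
  define P where "P = (\<lambda>i j. Li.Pm$i$j)"
  define Ps where "Ps = (\<lambda>i j. Li.Psm$i$j)"
  define C where "C = (\<lambda>i j k. cartan F i j k y)"
  define Cs where "Cs = (\<lambda>i j k. cartan Ls i j k y)"
  have Hy2: "(\<Sum>k\<in>UNIV. y$k * H k i) = 0" for i
  proof -
    have "(\<Sum>k\<in>UNIV. y$k * H k i) = (\<Sum>k\<in>UNIV. y$k * H i k)"
      by (intro sum.cong refl arg_cong2[where f="(*)"] Hsym)
    then show ?thesis using Hy by simp
  qed
  have Cs1: "C i j k = C j i k" for i j k
    unfolding C_def cF using Hsym[of i j] Tsym1[of k i j] Hsym[of k i] Hsym[of k j] by (simp add: algebra_simps)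
  have Cs2: "C i j k = C i k j" for i j k
  proof -
    have "T k i j = T j i k" using Tsym1[of k i j] Tsym2[of k j i] Tsym1[of j k i] by simp
    then show ?thesis
      unfolding C_def cF using Hsym[of i k] Hsym[of j i] Hsym[of j k] by (simp add: algebra_simps)
  qed
  have Cy: "(\<Sum>k\<in>UNIV. y$k * C i j k) = 0" for i j
  proof -
    have "(\<Sum>k\<in>UNIV. y$k * C i j k) = (1/2) * ((\<Sum>k\<in>UNIV. y$k * l$k) * H i j + Fy * (\<Sum>k\<in>UNIV. y$k * T k i j)
        + (\<Sum>k\<in>UNIV. y$k * H k i) * l$j + l$i * (\<Sum>k\<in>UNIV. y$k * H k j))"
      unfolding C_def cF by (simp add: sum.distrib sum_distrib_left sum_distrib_right algebra_simps)
    then show ?thesis unfolding ly Ty Hy2 by simp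
  qed
  have Chor: "hor3 y C" by (rule symX_hor3[OF Cs1 Cs2 Cy])
  have Csym: "Co.symX C" unfolding Co.symX_def using Cs1 Cs2 by blast
  have Cs_eq: "Cs = (\<lambda>i j k. Li.\<tau> * C i j k + (e/2) * Co.K i j k)"
  proof (intro ext)
    fix i j k
    show "Cs i j k = Li.\<tau> * C i j k + (e/2) * Co.K i j k"
      unfolding Co.K_def unfolding Cs_def C_def cLs cF Li.\<tau>_def Li.Lsy_def Li.mv_def
      using Fy Hsym[of k i] Hsym[of k j]
      by (simp add: field_simps)
  qed
  have Cshor: "hor3 y Cs" unfolding Cs_eq by (rule hor3_lin[OF Chor Co.K_hor])
  have vF: "vscalar F y = SCB3 P P P C C"
    unfolding vscalar_SCB P_def C_def Pm_eq ..
  have vL: "vscalar Ls y = SCB3 Ps Ps Ps Cs Cs"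
    unfolding vscalar_SCB Ps_def Cs_def Psm_eq ..
  have step1: "SCB3 Ps Ps Ps Cs Cs = (1/Li.\<tau>)^3 * SCB3 P P P Cs Cs"
    unfolding Ps_def P_def by (rule SCB3_cswap[OF Li.cswap Cshor Cshor])
  have step2: "SCB3 P P P Cs Cs = Li.\<tau>^2 * SCB3 P P P C C + 2 * Li.\<tau> * (e/2) * SCB3 P P P C Co.K
       + (e/2)^2 * SCB3 P P P Co.K Co.K"
    unfolding Cs_eq P_def by (rule Co.SCB_bilin)
  have step3: "SCB3 P P P C Co.K = (2 - real CARD('n)) / Fy * (\<Sum>r\<in>UNIV. Co.tr C r * Co.Pm r)"
    unfolding P_def by (rule Co.XK[OF Chor Csym])
  have step4: "SCB3 P P P Co.K Co.K = (2 - real CARD('n)) / Fy * ((real CARD('n) + 1) / Fy * (\<Sum>r\<in>UNIV. Li.mv$r * Co.Pm r))"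
    unfolding P_def Co.XK[OF Co.K_hor Co.K_sym] Co.cross_sum ..
  have trC: "cartan_vec F i y = Co.tr C i" for i
  proof -
    have "cartan_vec F i y = (\<Sum>j\<in>UNIV. \<Sum>k\<in>UNIV. P j k * C i j k)"
      unfolding cartan_vec_def P_def C_def Pm_eq ..
    also have "\<dots> = (\<Sum>j\<in>UNIV. \<Sum>k\<in>UNIV. P j k * C j k i)"
      by (intro sum.cong refl arg_cong2[where f="(*)"]) (metis Cs1 Cs2)
    finally show ?thesis unfolding Co.tr_def P_def .
  qed
  have trCy: "(\<Sum>r\<in>UNIV. y$r * Co.tr C r) = 0"
    unfolding Co.tr_def using Cy Cs1 Cs2
    by (simp only: engine[where y="($) y"]) simp
  have PmE: "Co.Pm r = (fund_inv F y *v bb)$r - (bb \<bullet> y / Fy) * (y$r / Fy)" for r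
  proof -
    have "Co.Pm r = (\<Sum>s\<in>UNIV. Li.Pm$r$s * bb$s) - (bb \<bullet> y / Fy) * (\<Sum>s\<in>UNIV. Li.Pm$r$s * l$s)"
      unfolding Co.Pm_def unfolding Li.mv_def by (simp add: algebra_simps sum_subtractf sum_distrib_left)
    then show ?thesis unfolding Li.Pl unfolding Pm_eq mv_entry .
  qed
  have cb: "c_beta F bb y = (\<Sum>r\<in>UNIV. Co.tr C r * Co.Pm r)"
  proof -
    have "(\<Sum>r\<in>UNIV. Co.tr C r * Co.Pm r) = (\<Sum>r\<in>UNIV. Co.tr C r * (fund_inv F y *v bb)$r)
        - (bb \<bullet> y / Fy / Fy) * (\<Sum>r\<in>UNIV. y$r * Co.tr C r)"
      unfolding PmE by (simp add: algebra_simps sum_subtractf sum_distrib_left)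
    then show ?thesis unfolding trCy c_beta_def trC by simp
  qed
  have mvecE: "mvec F bb y = Li.mv" unfolding mvec_def Li.mv_def by (simp add: l_def Fy_def)
  have ms: "msq F bb y = (\<Sum>r\<in>UNIV. Li.mv$r * Co.Pm r)"
    unfolding msq_def mvecE inner_vec_def Co.Pm_def Pm_eq[symmetric] mv_entry by simp
  have LsEq: "(\<lambda>v. exp (\<sigma> x) * L x v + b x \<bullet> v) = Ls" unfolding Ls_def e_def F_def bb_def ..
  have tauE: "Li.\<tau> = e * Ls y / Fy" unfolding Li.\<tau>_def Li.Lsy_def LsE ..
  have "vscalar Ls y = (1/(e * Ls y / Fy)) * (vscalar F y - (real CARD('n) - 2) / Ls y * A_beta F Ls bb y)"
    unfolding vL step1 step2 step3 step4 vF A_beta_def cb ms tauE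
    by (rule final_arith) (use e Fy Lsp LsE in auto)
  then show ?thesis unfolding Let_def LsEq by (simp add: F_def e_def bb_def Fy_def)
qed


end
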